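(* Consider the Stochastic Asynchronous PALM algorithm under assumptions (S1)–(S4), with $\{j_k\}$ i.i.d. uniform on $\{1,\dots,m\}$, $\sigma(j_k)$ independent of $\mathcal F_k:=\sigma(x^1,\dots,x^k)$, and $x^{k-d_k}$ $\mathcal F_k$-measurable for every $k$. For $j\in\{1,\dots,m\}$ and $k\in\mathbb N$ let $w^k_j:=\zeta_j(x^k_j-\gamma^k_j\nabla_jf(x^{k-d_k}),\gamma^k_j)$ and $w^k=(w^k_1,\dots,w^k_m)$. Then for all $k\in\mathbb N$, almost surely, $$\mathbb E\big[\Phi_s(x^{k+1},x^k,\dots,x^{k-\tau+1})\mid\mathcal F_k\big]+\frac1{2m}\sum_{j=1}^m\Big(\frac1{\gamma^k_j}-L_j(x^k_{-j})-\frac{2M\tau}{\sqrt m}\Big)\|w^k_j-x^k_j\|^2\le\Phi_s(x^k,x^{k-1},\dots,x^{k-\tau}).$$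
   Context: Let $\mathcal H=\mathcal H_1\times\cdots\times\mathcal H_m$ be a product of finite-dimensional real Euclidean spaces with $\langle x,y\rangle=\sum_j\langle x_j,y_j\rangle$; $x_{-j}$ denotes $x$ with its $j$th block removed and $(x_{-j};y)$ the point with $j$th block replaced by $y$. Let $f:\mathcal H\to\mathbb R$ be $C^1$, $r_j:\mathcal H_j\to(-\infty,\infty]$ proper lower semicontinuous, $r(x)=\sum_j r_j(x_j)$, $\Psi=f+r$ bounded below. $r$ is prox-bounded: there is $\lambda_r>0$ with $\operatorname{argmin}_y\{r(y)+\frac1{2\lambda}\|x-y\|^2\}\ne\emptyset$ for all $x$ and $0<\lambda\le\lambda_r$. For each $j$ there is $L_j:\mathcal H_{-j}\to(0,\infty)$ such that $y\mapsto\nabla_jf(x_{-j};y)$ is $L_j(x_{-j})$-Lipschitz for all $x$. Everything lives on a probability space, $\mathcal H$ carrying its Borel $\sigma$-algebra. Delays: an integer $\tau\ge1$ and $d_k\in\{0,\dots,\tau\}^m$; $x^{k-d_k}:=(x_1^{k-d_{k,1}},\dots,x_m^{k-d_{k,m}})$ with $x^i_j=x^0_j$ for $i\le0$ (and $x^i=x^0$ for $i<0$). Stochastic Asynchronous PALM: choose $x^0\in\mathcal H$, $c\in(0,1)$, $M>0$. For each $k$: sample $j_k\in\{1,\dots,m\}$; set $\gamma^k_j=\min\{c(L_j(x^{k-d_k}_{-j})+2M\tau/\sqrt m)^{-1},\lambda_r\}$; set $x^{k+1}_{j_k}=\zeta_{j_k}(x^k_{j_k}-\gamma^k_{j_k}\nabla_{j_k}f(x^{k-d_k}),\gamma^k_{j_k})$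 and $x^{k+1}_j=x^k_j$ for $j\ne j_k$. (S1) each $L_j$ is measurable. (S2) each $\zeta_j:\mathcal H_j\times(0,\infty)\to\mathcal H_j$ is measurable with $\zeta_j(v,\gamma)\in\operatorname{argmin}_u\{r_j(u)+\frac1{2\gamma}\|u-v\|^2\}$. (S3) there is $L>0$ with $\sup_kL_j(x^{k-d_k}_{-j})\le L$ for all $j$, a.s. (S4) $\|\nabla f(x^k)-\nabla f(x^{k-d_k})\|\le M\|x^k-x^{k-d_k}\|$ for all $k$, a.s. Stochastic Lyapunov function $\Phi_s:\mathcal H^{1+\tau}\to(-\infty,\infty]$: $\Phi_s(x(0),\dots,x(\tau))=f(x(0))+r(x(0))+\frac{M}{2\sqrt m}\sum_{h=1}^\tau(\tau-h+1)\|x(h)-x(h-1)\|^2$. *)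

theory Defs
  imports "HOL-Analysis.Analysis" "HOL-Probability.Probability"
begin

text \<open>The product space H = H_1 x ... x H_m is modelled as a Euclidean space 'a whose
  orthonormal Basis is partitioned into blocks B 1, ..., B m; H_j = span (B j).\<close>

definition blk :: "(nat \<Rightarrow> 'a set) \<Rightarrow> nat \<Rightarrow> 'a::euclidean_space \<Rightarrow> 'a" where
  "blk B j x = (\<Sum>b\<in>B j. (x \<bullet> b) *\<^sub>R b)"

text \<open>(x_{-j}; y): replace the j-th block of x by y (y in H_j).  The point x_{-j} of
  H_{-j} is represented by x - blk B j x.\<close>
definition repl :: "(nat \<Rightarrow> 'a set) \<Rightarrow> nat \<Rightarrow> 'a::euclidean_space \<Rightarrow> 'a \<Rightarrow> 'a" where
  "repl B j x y = x - blk B j x + blk B j y"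

definition is_block_partition :: "(nat \<Rightarrow> 'a::euclidean_space set) \<Rightarrow> nat \<Rightarrow> bool" where
  "is_block_partition B m \<longleftrightarrow>
     (\<forall>i\<in>{1..m}. B i \<subseteq> Basis) \<and>
     (\<forall>i\<in>{1..m}. \<forall>i'\<in>{1..m}. i \<noteq> i' \<longrightarrow> B i \<inter> B i' = {}) \<and>
     (\<Union>i\<in>{1..m}. B i) = Basis"

definition proper_on :: "'a set \<Rightarrow> ('a \<Rightarrow> ereal) \<Rightarrow> bool" where
  "proper_on S h \<longleftrightarrow> (\<forall>u\<in>S. h u \<noteq> -\<infinity>) \<and> (\<exists>u\<in>S. h u \<noteq> \<infinity>)"

definition lsc_on :: "'a::topological_space set \<Rightarrow> ('a \<Rightarrow> ereal) \<Rightarrow> bool" where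
  "lsc_on S h \<longleftrightarrow> (\<forall>t::real. closed {u\<in>S. h u \<le> ereal t})"

definition rsum :: "(nat \<Rightarrow> 'a set) \<Rightarrow> nat \<Rightarrow> (nat \<Rightarrow> 'a \<Rightarrow> ereal) \<Rightarrow> 'a::euclidean_space \<Rightarrow> ereal" where
  "rsum B m r x = (\<Sum>j\<in>{1..m}. r j (blk B j x))"

definition Psi :: "(nat \<Rightarrow> 'a set) \<Rightarrow> nat \<Rightarrow> ('a \<Rightarrow> real) \<Rightarrow> (nat \<Rightarrow> 'a \<Rightarrow> ereal) \<Rightarrow> 'a::euclidean_space \<Rightarrow> ereal" where
  "Psi B m f r x = ereal (f x) + rsum B m r x"

definition Phi_s :: "(nat \<Rightarrow> 'a set) \<Rightarrow> nat \<Rightarrow> ('a \<Rightarrow> real) \<Rightarrow> (nat \<Rightarrow> 'a \<Rightarrow> ereal) \<Rightarrow> real \<Rightarrow> nat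
      \<Rightarrow> (nat \<Rightarrow> 'a::euclidean_space) \<Rightarrow> ereal" where
  "Phi_s B m f r Mc \<tau> y = Psi B m f r (y 0)
     + ereal (Mc / (2 * sqrt (real m)) * (\<Sum>h\<in>{1..\<tau>}. real (\<tau> - h + 1) * (norm (y h - y (h - 1)))\<^sup>2))"

text \<open>Delayed iterate x^{k-d_k}: block j taken from x^{k - d_{k,j}} (nat subtraction
  realises the convention x^i = x^0 for i \<le> 0).\<close>
definition delayed :: "(nat \<Rightarrow> 'a set) \<Rightarrow> nat \<Rightarrow> (nat \<Rightarrow> 'w \<Rightarrow> 'a::euclidean_space)
      \<Rightarrow> (nat \<Rightarrow> 'w \<Rightarrow> nat \<Rightarrow> nat) \<Rightarrow> nat \<Rightarrow> 'w \<Rightarrow> 'a" where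
  "delayed B m x d k \<omega> = (\<Sum>j\<in>{1..m}. blk B j (x (k - d k \<omega> j) \<omega>))"

definition gam :: "(nat \<Rightarrow> 'a set) \<Rightarrow> nat \<Rightarrow> (nat \<Rightarrow> 'a \<Rightarrow> real) \<Rightarrow> real \<Rightarrow> real \<Rightarrow> nat \<Rightarrow> real
      \<Rightarrow> (nat \<Rightarrow> 'w \<Rightarrow> 'a::euclidean_space) \<Rightarrow> (nat \<Rightarrow> 'w \<Rightarrow> nat \<Rightarrow> nat) \<Rightarrow> nat \<Rightarrow> 'w \<Rightarrow> nat \<Rightarrow> real" where
  "gam B m L c Mc \<tau> lam x d k \<omega> j =
     (let z = delayed B m x d k \<omega>
      in min (c / (L j (z - blk B j z) + 2 * Mc * real \<tau> / sqrt (real m))) lam)"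

definition wblk :: "(nat \<Rightarrow> 'a set) \<Rightarrow> nat \<Rightarrow> ('a \<Rightarrow> 'a) \<Rightarrow> (nat \<Rightarrow> 'a \<Rightarrow> real \<Rightarrow> 'a)
      \<Rightarrow> (nat \<Rightarrow> 'a \<Rightarrow> real) \<Rightarrow> real \<Rightarrow> real \<Rightarrow> nat \<Rightarrow> real
      \<Rightarrow> (nat \<Rightarrow> 'w \<Rightarrow> 'a::euclidean_space) \<Rightarrow> (nat \<Rightarrow> 'w \<Rightarrow> nat \<Rightarrow> nat) \<Rightarrow> nat \<Rightarrow> 'w \<Rightarrow> nat \<Rightarrow> 'a" where
  "wblk B m g \<zeta> L c Mc \<tau> lam x d k \<omega> j =
     (let \<gamma> = gam B m L c Mc \<tau> lam x d k \<omega> j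
      in \<zeta> j (blk B j (x k \<omega>) - \<gamma> *\<^sub>R blk B j (g (delayed B m x d k \<omega>))) \<gamma>)"

definition nat_filtration :: "'w measure \<Rightarrow> (nat \<Rightarrow> 'w \<Rightarrow> 'a::topological_space) \<Rightarrow> nat \<Rightarrow> 'w measure" where
  "nat_filtration M X k =
     sigma (space M) {X i -` A \<inter> space M | i A. i \<in> {1..k} \<and> A \<in> sets borel}"

text \<open>Conditional expectation of an extended-real random variable bounded below by c:
  E[X | F] = c + E[X - c | F], with the library's nonnegative conditional expectation.\<close>
definition cond_exp_lb :: "'w measure \<Rightarrow> 'w measure \<Rightarrow> real \<Rightarrow> ('w \<Rightarrow> ereal) \<Rightarrow> 'w \<Rightarrow> ereal" where
  "cond_exp_lb M F c X \<omega> =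
     ereal c + enn2ereal (nn_cond_exp M F (\<lambda>\<eta>. e2ennreal (X \<eta> - ereal c)) \<omega>)"

end

theory Submission
  imports Defs
begin


lemma blk_basis:
  assumes "B j \<subseteq> Basis" "b \<in> Basis"
  shows "blk B j x \<bullet> b = (if b \<in> B j then x \<bullet> b else 0)"
proof -
  have fin: "finite (B j)" using assms(1) finite_Basis finite_subset by blast
  have "blk B j x \<bullet> b = (\<Sum>b'\<in>B j. (x \<bullet> b') * (b' \<bullet> b))"
    unfolding blk_def by (simp add: inner_sum_left)
  also have "\<dots> = (\<Sum>b'\<in>B j. if b' = b then x \<bullet> b else 0)"
    by (rule sum.cong) (use assms in \<open>auto simp: inner_Basis\<close>)
  also have "\<dots> = (if b \<in> B j then x \<bullet> b else 0)"
    using fin by simp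
  finally show ?thesis .
qed

lemma linear_blk: "linear (blk B j)"
  unfolding blk_def
  by (intro linear_compose_sum) (auto intro!: linearI simp: inner_add_left scaleR_add_left)

lemma blk_add: "blk B j (x + y) = blk B j x + blk B j y"
  using linear_blk[of B j] by (simp add: linear_add)
lemma blk_diff: "blk B j (x - y) = blk B j x - blk B j y"
  using linear_blk[of B j] by (simp add: linear_diff)
lemma blk_scale: "blk B j (c *\<^sub>R x) = c *\<^sub>R blk B j x"
  using linear_blk[of B j] by (simp add: linear_scale)
lemma blk_zero: "blk B j 0 = 0"
  using linear_blk[of B j] by (simp add: linear_0)

lemma bounded_linear_blk: "bounded_linear (blk B j)"
  using linear_blk linear_conv_bounded_linear by blast

lemma continuous_blk: "continuous_on S (blk B j)"
  using bounded_linear_blk linear_continuous_on by blast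

lemma blk_in_span: "blk B j x \<in> span (B j)"
  unfolding blk_def by (intro span_sum span_scale span_base) auto

lemma blk_basis_self:
  assumes "B j \<subseteq> Basis" "b \<in> B j"
  shows "blk B j b = b"
proof (rule euclidean_eqI)
  fix b' :: 'a assume b': "b' \<in> Basis"
  have bB: "b \<in> Basis" using assms by blast
  show "blk B j b \<bullet> b' = b \<bullet> b'"
    unfolding blk_basis[where B=B and j=j, OF assms(1) b'] using b' bB assms(2)
    by (cases "b' = b") (auto simp: inner_Basis)
qed

lemma blk_span:
  assumes "B j \<subseteq> Basis" "y \<in> span (B j)"
  shows "blk B j y = y"
  using assms(2)
proof (induction rule: span_induct_alt)
  case base
  then show ?case by (simp add: blk_zero)
next
  case (step c x y)
  then show ?case by (simp add: blk_add blk_scale blk_basis_self[where B=B and j=j, OF assms(1)])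
qed

lemma blk_blk_same: "B j \<subseteq> Basis \<Longrightarrow> blk B j (blk B j x) = blk B j x"
  by (rule blk_span) (auto intro: blk_in_span)

lemma span_basis_coord:
  fixes B :: "nat \<Rightarrow> 'a::euclidean_space set"
  assumes "B j \<subseteq> Basis" "y \<in> span (B j)" "b \<in> Basis" "b \<notin> B j"
  shows "y \<bullet> b = 0"
  using blk_basis[where B=B and j=j, OF assms(1,3), where x=y] blk_span[where B=B and j=j, OF assms(1,2)] assms(4) by simp

locale blocks =
  fixes B :: "nat \<Rightarrow> 'a::euclidean_space set" and m :: nat
  assumes bp: "is_block_partition B m"
begin

lemmas bp_all = bp[unfolded is_block_partition_def]

lemma bp_sub: "i \<in> {1..m} \<Longrightarrow> B i \<subseteq> Basis"
  using conjunct1[OF bp_all] by (rule bspec)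

lemma bp_disj: "i \<in> {1..m} \<Longrightarrow> l \<in> {1..m} \<Longrightarrow> i \<noteq> l \<Longrightarrow> B i \<inter> B l = {}"
  using conjunct1[OF conjunct2[OF bp_all]] by simp

lemma bp_union: "(\<Union>i\<in>{1..m}. B i) = Basis"
  using conjunct2[OF conjunct2[OF bp_all]] .

lemma blk_blk_other:
  assumes "i \<in> {1..m}" "l \<in> {1..m}" "i \<noteq> l"
  shows "blk B l (blk B i x) = 0"
proof (rule euclidean_eqI)
  fix b :: 'a assume b: "b \<in> Basis"
  have d: "B i \<inter> B l = {}" by (rule bp_disj[OF assms])
  show "blk B l (blk B i x) \<bullet> b = 0 \<bullet> b"
    unfolding blk_basis[where B=B and j=l, OF bp_sub[OF assms(2)] b]
      blk_basis[where B=B and j=i, OF bp_sub[OF assms(1)] b]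
    using d by auto
qed

lemma blk_span_other:
  assumes "i \<in> {1..m}" "l \<in> {1..m}" "i \<noteq> l" "y \<in> span (B i)"
  shows "blk B l y = 0"
  using blk_blk_other[OF assms(1-3), where x=y] blk_span[where B=B and j=i, OF bp_sub[OF assms(1)] assms(4)] by simp

lemma sum_blk: "(\<Sum>i\<in>{1..m}. blk B i x) = x"
proof (rule euclidean_eqI)
  fix b :: 'a assume b: "b \<in> Basis"
  have "b \<in> (\<Union>i\<in>{1..m}. B i)" unfolding bp_union by (rule b)
  then obtain i where i: "i \<in> {1..m}" "b \<in> B i" by (rule UN_E)
  have u: "\<And>l. l \<in> {1..m} \<Longrightarrow> b \<in> B l \<Longrightarrow> l = i"
  proof (rule ccontr)
    fix l assume l: "l \<in> {1..m}" "b \<in> B l" "l \<noteq> i"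
    have "B l \<inter> B i = {}" by (rule bp_disj[OF l(1) i(1) l(3)])
    then show False using i(2) l(2) by blast
  qed
  have "(\<Sum>l\<in>{1..m}. blk B l x) \<bullet> b = (\<Sum>l\<in>{1..m}. if l = i then x \<bullet> b else 0)"
    unfolding inner_sum_left
  proof (rule sum.cong)
    fix l assume l: "l \<in> {1..m}"
    show "blk B l x \<bullet> b = (if l = i then x \<bullet> b else 0)"
      unfolding blk_basis[where B=B and j=l, OF bp_sub[OF l] b]
    proof (cases "l = i")
      case True
      then show "(if b \<in> B l then x \<bullet> b else 0) = (if l = i then x \<bullet> b else 0)" using i(2) by simp
    next
      case False
      then have "b \<notin> B l" using u[OF l] by blast
      then show "(if b \<in> B l then x \<bullet> b else 0) = (if l = i then x \<bullet> b else 0)" using False by simp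
    qed
  qed simp
  also have "\<dots> = x \<bullet> b" using i(1) by (subst sum.delta) auto
  finally show "(\<Sum>l\<in>{1..m}. blk B l x) \<bullet> b = x \<bullet> b" .
qed

lemma norm_sq_coords: "(norm (x::'a))\<^sup>2 = (\<Sum>b\<in>Basis. (x \<bullet> b)\<^sup>2)"
proof -
  have "(norm x)\<^sup>2 = x \<bullet> x" by (rule power2_norm_eq_inner)
  also have "\<dots> = (\<Sum>b\<in>Basis. x \<bullet> b * (x \<bullet> b))" by (rule euclidean_inner)
  finally show ?thesis by (simp add: power2_eq_square)
qed

lemma norm_le_coords:
  assumes "\<And>b. b \<in> Basis \<Longrightarrow> \<bar>(v::'a) \<bullet> b\<bar> \<le> \<bar>u \<bullet> b\<bar>"
  shows "norm v \<le> norm u"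
proof -
  have "(norm v)\<^sup>2 \<le> (norm u)\<^sup>2"
    unfolding norm_sq_coords
  proof (rule sum_mono)
    fix b :: 'a assume "b \<in> Basis"
    then have "\<bar>v \<bullet> b\<bar> \<le> \<bar>u \<bullet> b\<bar>" by (rule assms)
    then show "(v \<bullet> b)\<^sup>2 \<le> (u \<bullet> b)\<^sup>2" by (simp add: abs_le_square_iff)
  qed
  then show ?thesis by (rule power2_le_imp_le) simp
qed

lemma norm_sq_blocks: "(norm x)\<^sup>2 = (\<Sum>i\<in>{1..m}. (norm (blk B i x))\<^sup>2)"
proof -
  have "(\<Sum>i\<in>{1..m}. (norm (blk B i x))\<^sup>2) = (\<Sum>i\<in>{1..m}. \<Sum>b\<in>B i. (x \<bullet> b)\<^sup>2)"
  proof (rule sum.cong)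
    fix i assume i: "i \<in> {1..m}"
    have "(norm (blk B i x))\<^sup>2 = (\<Sum>b\<in>Basis. (if b \<in> B i then (x \<bullet> b)\<^sup>2 else 0))"
      unfolding norm_sq_coords[of "blk B i x"]
    proof (rule sum.cong)
      fix b :: 'a assume b: "b \<in> Basis"
      show "(blk B i x \<bullet> b)\<^sup>2 = (if b \<in> B i then (x \<bullet> b)\<^sup>2 else 0)"
        unfolding blk_basis[where B=B and j=i, OF bp_sub[OF i] b] by simp
    qed simp
    also have "\<dots> = (\<Sum>b\<in>Basis \<inter> B i. (x \<bullet> b)\<^sup>2)"
      by (simp only: sum.inter_restrict[symmetric] finite_Basis)
    also have "\<dots> = (\<Sum>b\<in>B i. (x \<bullet> b)\<^sup>2)" using bp_sub[OF i] by (simp add: Int_absorb1)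
    finally show "(norm (blk B i x))\<^sup>2 = (\<Sum>b\<in>B i. (x \<bullet> b)\<^sup>2)" .
  qed simp
  also have "\<dots> = (\<Sum>b\<in>(\<Union>i\<in>{1..m}. B i). (x \<bullet> b)\<^sup>2)"
    apply (rule sum.UNION_disjoint[symmetric])
      apply simp
     apply (meson bp_sub finite_Basis finite_subset)
    using bp_disj by blast
  also have "\<dots> = (norm x)\<^sup>2" unfolding bp_union norm_sq_coords[of x] ..
  finally show ?thesis ..
qed

lemma inner_blk_span:
  assumes "i \<in> {1..m}" "h \<in> span (B i)"
  shows "v \<bullet> h = blk B i v \<bullet> h"
proof -
  have "v \<bullet> h = (\<Sum>b\<in>Basis. v \<bullet> b * (h \<bullet> b))" by (rule euclidean_inner)
  also have "\<dots> = (\<Sum>b\<in>Basis. blk B i v \<bullet> b * (h \<bullet> b))"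
  proof (rule sum.cong)
    fix b :: 'a assume b: "b \<in> Basis"
    show "v \<bullet> b * (h \<bullet> b) = blk B i v \<bullet> b * (h \<bullet> b)"
      unfolding blk_basis[where B=B and j=i, OF bp_sub[OF assms(1)] b]
      using span_basis_coord[where B=B and j=i, OF bp_sub[OF assms(1)] assms(2) b] by auto
  qed simp
  also have "\<dots> = blk B i v \<bullet> h" by (rule euclidean_inner[symmetric])
  finally show ?thesis .
qed

lemma norm_blk_le: "norm (blk B i x) \<le> norm x" if "i \<in> {1..m}"
  by (rule norm_le_coords) (simp add: blk_basis[where B=B and j=i, OF bp_sub[OF that]])

lemma repl_blk_same: "i \<in> {1..m} \<Longrightarrow> y \<in> span (B i) \<Longrightarrow> blk B i (repl B i z y) = y"
  unfolding repl_def blk_add blk_diff blk_blk_same[where B=B and j=i, OF bp_sub] blk_span[where B=B and j=i, OF bp_sub] by simp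

lemma repl_blk_other: "i \<in> {1..m} \<Longrightarrow> l \<in> {1..m} \<Longrightarrow> l \<noteq> i \<Longrightarrow> blk B l (repl B i z y) = blk B l z"
  unfolding repl_def by (simp add: blk_add blk_diff blk_blk_other)

lemma repl_span: "i \<in> {1..m} \<Longrightarrow> y \<in> span (B i) \<Longrightarrow> repl B i z y = z - blk B i z + y"
  unfolding repl_def using blk_span[where B=B and j=i, OF bp_sub] by simp

end



context blocks begin

lemma descent:
  fixes f :: "'a \<Rightarrow> real" and g :: "'a \<Rightarrow> 'a" and L :: "nat \<Rightarrow> 'a \<Rightarrow> real"
  assumes grad: "\<forall>z. (f has_derivative (\<lambda>h. g z \<bullet> h)) (at z)"
    and lip: "\<forall>z y y'. y \<in> span (B i) \<longrightarrow> y' \<in> span (B i) \<longrightarrow>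
            norm (blk B i (g (repl B i z y)) - blk B i (g (repl B i z y')))
              \<le> L i (z - blk B i z) * norm (y - y')"
    and i: "i \<in> {1..m}" and y: "y \<in> span (B i)"
  shows "f (repl B i z y) \<le> f z + g z \<bullet> (y - blk B i z) + L i (z - blk B i z) / 2 * (norm (y - blk B i z))\<^sup>2"
proof -
  define h where "h = y - blk B i z"
  define Lz where "Lz = L i (z - blk B i z)"
  define c where "c = g z \<bullet> h"
  have hs: "h \<in> span (B i)" unfolding h_def by (intro span_diff y blk_in_span)
  have bzs: "blk B i z \<in> span (B i)" by (rule blk_in_span)
  define \<phi> where "\<phi> = (\<lambda>t. f (z + t *\<^sub>R h) - t * c - Lz / 2 * (t\<^sup>2 * (norm h)\<^sup>2))"
  have df: "((\<lambda>t. f (z + t *\<^sub>R h)) has_real_derivative (g (z + t *\<^sub>R h) \<bullet> h)) (at t)" for t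
  proof -
    have d0: "((\<lambda>t. z + t *\<^sub>R h) has_derivative (\<lambda>s. s *\<^sub>R h)) (at t)"
      by (auto intro!: derivative_eq_intros)
    have d1: "(f has_derivative (\<lambda>v. g (z + t *\<^sub>R h) \<bullet> v)) (at (z + t *\<^sub>R h))"
      using grad by blast
    have "((\<lambda>t. f (z + t *\<^sub>R h)) has_derivative (\<lambda>s. g (z + t *\<^sub>R h) \<bullet> (s *\<^sub>R h))) (at t)"
      using diff_chain_at[OF d0 d1] by (simp add: o_def)
    moreover have "(\<lambda>s. g (z + t *\<^sub>R h) \<bullet> (s *\<^sub>R h)) = (*) (g (z + t *\<^sub>R h) \<bullet> h)"
      by (rule ext) (simp add: mult.commute)
    ultimately show ?thesis unfolding has_field_derivative_def by simp
  qed
  have dphi: "(\<phi> has_real_derivative (g (z + t *\<^sub>R h) \<bullet> h - c - Lz * t * (norm h)\<^sup>2)) (at t)" for t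
  proof -
    have "((\<lambda>t. f (z + t *\<^sub>R h) - t * c - Lz / 2 * (t\<^sup>2 * (norm h)\<^sup>2)) has_real_derivative
        (g (z + t *\<^sub>R h) \<bullet> h - 1 * c - Lz / 2 * ((2 * t) * (norm h)\<^sup>2))) (at t)"
    proof (intro DERIV_diff DERIV_cmult df)
      show "((\<lambda>t. t * c) has_real_derivative 1 * c) (at t)"
        by (auto intro!: derivative_eq_intros)
      show "((\<lambda>t. t\<^sup>2 * (norm h)\<^sup>2) has_real_derivative 2 * t * (norm h)\<^sup>2) (at t)"
        by (auto intro!: derivative_eq_intros)
    qed
    then show ?thesis unfolding \<phi>_def by (simp add: algebra_simps)
  qed
  have nonpos: "g (z + t *\<^sub>R h) \<bullet> h - c - Lz * t * (norm h)\<^sup>2 \<le> 0" if t: "0 \<le> t" for t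
  proof -
    have e1: "z + t *\<^sub>R h = repl B i z (blk B i z + t *\<^sub>R h)"
      using repl_span[OF i] bzs hs by (simp add: span_add span_scale)
    have e2: "z = repl B i z (blk B i z)"
      using repl_span[OF i bzs] by simp
    have "g (z + t *\<^sub>R h) \<bullet> h - c = (g (z + t *\<^sub>R h) - g z) \<bullet> h"
      unfolding c_def by (simp add: inner_diff_left)
    also have "\<dots> = blk B i (g (z + t *\<^sub>R h) - g z) \<bullet> h"
      by (rule inner_blk_span[OF i hs])
    also have "\<dots> \<le> norm (blk B i (g (z + t *\<^sub>R h) - g z)) * norm h"
      by (rule norm_cauchy_schwarz)
    also have "norm (blk B i (g (z + t *\<^sub>R h) - g z)) \<le> Lz * norm (t *\<^sub>R h)"
    proof -
      have "norm (blk B i (g (repl B i z (blk B i z + t *\<^sub>R h))) - blk B i (g (repl B i z (blk B i z))))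
            \<le> L i (z - blk B i z) * norm ((blk B i z + t *\<^sub>R h) - blk B i z)"
        using lip[rule_format, of "blk B i z + t *\<^sub>R h" "blk B i z" z] bzs hs
        by (simp add: span_add span_scale)
      then show ?thesis unfolding Lz_def blk_diff using e1 e2 by simp
    qed
    then have "norm (blk B i (g (z + t *\<^sub>R h) - g z)) * norm h \<le> Lz * norm (t *\<^sub>R h) * norm h"
      by (rule mult_right_mono) simp
    also have "Lz * norm (t *\<^sub>R h) * norm h = Lz * t * (norm h)\<^sup>2"
      using t by (simp add: power2_eq_square)
    finally show ?thesis by simp
  qed
  have "\<phi> 1 \<le> \<phi> 0"
  proof (rule DERIV_nonpos_imp_nonincreasing[of 0 1 \<phi>])
    fix t :: real assume "0 \<le> t" "t \<le> 1"
    then show "\<exists>y. (\<phi> has_real_derivative y) (at t) \<and> y \<le> 0"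
      using dphi nonpos by blast
  qed simp
  moreover have "repl B i z y = z + h"
    using repl_span[OF i y] unfolding h_def by simp
  ultimately show ?thesis
    unfolding \<phi>_def c_def Lz_def h_def by simp
qed

lemma ereal_move:
  fixes a b :: ereal
  assumes "a + ereal p \<le> b + ereal q"
  shows "a \<le> b + ereal (q - p)"
  using assms by (cases a; cases b) auto

lemma ereal_rearr:
  fixes c R :: ereal
  shows "ereal (a + p) + ((c + ereal q) + R) = ereal a + (c + R) + ereal (p + q)"
  by (cases c; cases R) (simp_all add: ac_simps)

lemma step_bound:
  fixes f :: "'a \<Rightarrow> real" and g :: "'a \<Rightarrow> 'a" and L :: "nat \<Rightarrow> 'a \<Rightarrow> real"
    and r :: "nat \<Rightarrow> 'a \<Rightarrow> ereal" and xk zd w :: 'a and \<gamma> :: real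
  assumes grad: "\<forall>z. (f has_derivative (\<lambda>h. g z \<bullet> h)) (at z)"
    and lip: "\<forall>z y y'. y \<in> span (B i) \<longrightarrow> y' \<in> span (B i) \<longrightarrow>
            norm (blk B i (g (repl B i z y)) - blk B i (g (repl B i z y')))
              \<le> L i (z - blk B i z) * norm (y - y')"
    and i: "i \<in> {1..m}" and gpos: "0 < \<gamma>" and w: "w \<in> span (B i)"
    and prox: "r i w + ereal ((norm (w - (blk B i xk - \<gamma> *\<^sub>R blk B i (g zd))))\<^sup>2 / (2 * \<gamma>))
       \<le> r i (blk B i xk) + ereal ((norm (blk B i xk - (blk B i xk - \<gamma> *\<^sub>R blk B i (g zd))))\<^sup>2 / (2 * \<gamma>))"
  shows "Psi B m f r (repl B i xk w) \<le> Psi B m f r xk + ereal (- (norm (w - blk B i xk))\<^sup>2 / (2 * \<gamma>)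
      + L i (xk - blk B i xk) / 2 * (norm (w - blk B i xk))\<^sup>2 + (g xk - g zd) \<bullet> (w - blk B i xk))"
proof -
  define G where "G = blk B i (g zd)"
  define D where "D = w - blk B i xk"
  define Lx where "Lx = L i (xk - blk B i xk)"
  have Ds: "D \<in> span (B i)" unfolding D_def by (intro span_diff w blk_in_span)
  have n1: "(norm (w - (blk B i xk - \<gamma> *\<^sub>R G)))\<^sup>2 = (norm D)\<^sup>2 + 2 * \<gamma> * (D \<bullet> G) + \<gamma>\<^sup>2 * (norm G)\<^sup>2"
  proof -
    have e: "w - (blk B i xk - \<gamma> *\<^sub>R G) = D + \<gamma> *\<^sub>R G" unfolding D_def by simp
    have "(norm (D + \<gamma> *\<^sub>R G))\<^sup>2 = (D + \<gamma> *\<^sub>R G) \<bullet> (D + \<gamma> *\<^sub>R G)"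
      by (rule power2_norm_eq_inner)
    moreover have "(D + \<gamma> *\<^sub>R G) \<bullet> (D + \<gamma> *\<^sub>R G) = D \<bullet> D + 2 * \<gamma> * (D \<bullet> G) + \<gamma>\<^sup>2 * (G \<bullet> G)"
      by (simp add: inner_add_left inner_add_right inner_commute[of G D] power2_eq_square algebra_simps)
    moreover have "D \<bullet> D = (norm D)\<^sup>2" "G \<bullet> G = (norm G)\<^sup>2" by (simp_all add: power2_norm_eq_inner)
    ultimately show ?thesis unfolding e by simp
  qed
  have n2: "(norm (blk B i xk - (blk B i xk - \<gamma> *\<^sub>R G)))\<^sup>2 = \<gamma>\<^sup>2 * (norm G)\<^sup>2"
    by (simp add: power_mult_distrib)
  have "r i w + ereal (((norm D)\<^sup>2 + 2 * \<gamma> * (D \<bullet> G) + \<gamma>\<^sup>2 * (norm G)\<^sup>2) / (2 * \<gamma>))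
       \<le> r i (blk B i xk) + ereal (\<gamma>\<^sup>2 * (norm G)\<^sup>2 / (2 * \<gamma>))"
    using prox unfolding G_def[symmetric] n1 n2 .
  then have rb: "r i w \<le> r i (blk B i xk) + ereal (- ((norm D)\<^sup>2 / (2 * \<gamma>) + D \<bullet> G))"
  proof -
    assume a: "r i w + ereal (((norm D)\<^sup>2 + 2 * \<gamma> * (D \<bullet> G) + \<gamma>\<^sup>2 * (norm G)\<^sup>2) / (2 * \<gamma>))
       \<le> r i (blk B i xk) + ereal (\<gamma>\<^sup>2 * (norm G)\<^sup>2 / (2 * \<gamma>))"
    have "\<gamma>\<^sup>2 * (norm G)\<^sup>2 / (2 * \<gamma>) - ((norm D)\<^sup>2 + 2 * \<gamma> * (D \<bullet> G) + \<gamma>\<^sup>2 * (norm G)\<^sup>2) / (2 * \<gamma>)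
        = - ((norm D)\<^sup>2 / (2 * \<gamma>) + D \<bullet> G)"
      using gpos by (simp add: field_simps power2_eq_square)
    then show ?thesis using ereal_move[OF a] by simp
  qed
  have fb: "f (repl B i xk w) \<le> f xk + g xk \<bullet> D + Lx / 2 * (norm D)\<^sup>2"
    using descent[where f=f and g=g and L=L and i=i and y=w and z=xk, OF grad lip i w] unfolding D_def Lx_def .
  have DG: "D \<bullet> G = g zd \<bullet> D"
    unfolding G_def using inner_blk_span[OF i Ds, of "g zd"] by (simp add: inner_commute)
  define R where "R = (\<Sum>l\<in>{1..m} - {i}. r l (blk B l xk))"
  have fin: "finite {1..m}" by simp
  have s1: "rsum B m r (repl B i xk w) = r i w + R"
  proof -
    have "rsum B m r (repl B i xk w) = r i (blk B i (repl B i xk w)) + (\<Sum>l\<in>{1..m} - {i}. r l (blk B l (repl B i xk w)))"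
      unfolding rsum_def by (rule sum.remove[OF fin i])
    also have "(\<Sum>l\<in>{1..m} - {i}. r l (blk B l (repl B i xk w))) = R"
      unfolding R_def by (rule sum.cong) (simp_all add: repl_blk_other[OF i])
    finally show ?thesis using repl_blk_same[OF i w] by simp
  qed
  have s2: "rsum B m r xk = r i (blk B i xk) + R"
    unfolding rsum_def R_def by (rule sum.remove[OF fin i])
  have "Psi B m f r (repl B i xk w) = ereal (f (repl B i xk w)) + (r i w + R)"
    unfolding Psi_def s1 ..
  also have "\<dots> \<le> ereal (f xk + g xk \<bullet> D + Lx / 2 * (norm D)\<^sup>2) + ((r i (blk B i xk) + ereal (- ((norm D)\<^sup>2 / (2 * \<gamma>) + D \<bullet> G))) + R)"
    by (intro add_mono order_refl) (use fb rb in simp_all)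
  also have "\<dots> = Psi B m f r xk + ereal (- (norm D)\<^sup>2 / (2 * \<gamma>) + Lx / 2 * (norm D)\<^sup>2 + (g xk - g zd) \<bullet> D)"
  proof -
    have "ereal (f xk + g xk \<bullet> D + Lx / 2 * (norm D)\<^sup>2) + ((r i (blk B i xk) + ereal (- ((norm D)\<^sup>2 / (2 * \<gamma>) + D \<bullet> G))) + R)
      = ereal (f xk) + (r i (blk B i xk) + R) + ereal (g xk \<bullet> D + Lx / 2 * (norm D)\<^sup>2 + (- ((norm D)\<^sup>2 / (2 * \<gamma>) + D \<bullet> G)))"
      using ereal_rearr[of "f xk" "g xk \<bullet> D + Lx / 2 * (norm D)\<^sup>2" "r i (blk B i xk)" "- ((norm D)\<^sup>2 / (2 * \<gamma>) + D \<bullet> G)" R]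
      by (simp only: add.assoc)
    also have "g xk \<bullet> D + Lx / 2 * (norm D)\<^sup>2 + (- ((norm D)\<^sup>2 / (2 * \<gamma>) + D \<bullet> G))
       = - (norm D)\<^sup>2 / (2 * \<gamma>) + Lx / 2 * (norm D)\<^sup>2 + (g xk - g zd) \<bullet> D"
      unfolding DG by (simp add: inner_diff_left)
    finally show ?thesis unfolding Psi_def s2 .
  qed
  finally show ?thesis unfolding D_def Lx_def .
qed

end



context blocks begin

lemma blk_coord_sum:
  assumes S: "S \<subseteq> {1..m}" and b: "b \<in> Basis"
  shows "\<bar>(\<Sum>l\<in>S. blk B l u) \<bullet> b\<bar> \<le> \<bar>u \<bullet> b\<bar>"
proof -
  have "b \<in> (\<Union>i\<in>{1..m}. B i)" unfolding bp_union by (rule b)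
  then obtain i where i: "i \<in> {1..m}" "b \<in> B i" by (rule UN_E)
  have u: "\<And>l. l \<in> {1..m} \<Longrightarrow> b \<in> B l \<Longrightarrow> l = i"
  proof (rule ccontr)
    fix l assume l: "l \<in> {1..m}" "b \<in> B l" "l \<noteq> i"
    have "B l \<inter> B i = {}" by (rule bp_disj[OF l(1) i(1) l(3)])
    then show False using i(2) l(2) by blast
  qed
  have "(\<Sum>l\<in>S. blk B l u) \<bullet> b = (\<Sum>l\<in>S. if l = i then u \<bullet> b else 0)"
    unfolding inner_sum_left
  proof (rule sum.cong)
    fix l assume l0: "l \<in> S"
    then have l: "l \<in> {1..m}" using S by blast
    show "blk B l u \<bullet> b = (if l = i then u \<bullet> b else 0)"
      unfolding blk_basis[where B=B and j=l, OF bp_sub[OF l] b]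
    proof (cases "l = i")
      case True
      then show "(if b \<in> B l then u \<bullet> b else 0) = (if l = i then u \<bullet> b else 0)" using i(2) by simp
    next
      case False
      then have "b \<notin> B l" using u[OF l] by blast
      then show "(if b \<in> B l then u \<bullet> b else 0) = (if l = i then u \<bullet> b else 0)" using False by simp
    qed
  qed simp
  also have "\<dots> = (if i \<in> S then u \<bullet> b else 0)"
    using S by (subst sum.delta) (auto intro: finite_subset)
  finally show ?thesis by simp
qed

lemma telescope:
  fixes X :: "nat \<Rightarrow> 'b::ab_group_add"
  shows "(\<Sum>h\<in>{1..d}. X (k - (h - 1)) - X (k - h)) = X k - X (k - d)"
proof (induction d)
  case 0
  then show ?case by simp
next
  case (Suc d)
  show ?case using Suc.IH by (simp only: sum.cl_ivl_Suc) simp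
qed

lemma telescope_tau:
  fixes X :: "nat \<Rightarrow> 'b::ab_group_add"
  assumes "d \<le> \<tau>"
  shows "X k - X (k - d) = (\<Sum>h\<in>{1..\<tau>}. if h \<le> d then X (k - (h - 1)) - X (k - h) else 0)"
proof -
  define T where "T = (\<lambda>h. X (k - (h - 1)) - X (k - h))"
  have "(\<Sum>h\<in>{1..\<tau>}. if h \<le> d then T h else 0)
      = (\<Sum>h\<in>{1..\<tau>} \<inter> {h. h \<le> d}. T h)"
    by (simp add: sum.inter_restrict)
  also have "{1..\<tau>} \<inter> {h. h \<le> d} = {1..d}" using assms by auto
  finally have "(\<Sum>h\<in>{1..\<tau>}. if h \<le> d then T h else 0) = (\<Sum>h\<in>{1..d}. T h)" .
  then show ?thesis unfolding T_def telescope by simp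
qed

lemma delay_bound:
  fixes X :: "nat \<Rightarrow> 'a" and dd :: "nat \<Rightarrow> nat"
  assumes dd: "\<forall>l. dd l \<le> \<tau>"
  shows "norm (X k - (\<Sum>l\<in>{1..m}. blk B l (X (k - dd l))))
     \<le> (\<Sum>h\<in>{1..\<tau>}. norm (X (k - h) - X (k - (h - 1))))"
proof -
  define u where "u h = X (k - (h - 1)) - X (k - h)" for h
  have "X k - (\<Sum>l\<in>{1..m}. blk B l (X (k - dd l))) = (\<Sum>l\<in>{1..m}. blk B l (X k - X (k - dd l)))"
    using sum_blk[of "X k"] by (simp add: blk_diff sum_subtractf)
  also have "\<dots> = (\<Sum>l\<in>{1..m}. \<Sum>h\<in>{1..\<tau>}. if h \<le> dd l then blk B l (u h) else 0)"
  proof (rule sum.cong)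
    fix l assume "l \<in> {1..m}"
    have "blk B l (X k - X (k - dd l)) = blk B l (\<Sum>h\<in>{1..\<tau>}. if h \<le> dd l then u h else 0)"
      unfolding u_def using telescope_tau[OF dd[rule_format, of l], of X k] by simp
    also have "\<dots> = (\<Sum>h\<in>{1..\<tau>}. blk B l (if h \<le> dd l then u h else 0))"
      by (rule linear_sum[OF linear_blk])
    also have "\<dots> = (\<Sum>h\<in>{1..\<tau>}. if h \<le> dd l then blk B l (u h) else 0)"
      by (rule sum.cong) (simp_all add: blk_zero)
    finally show "blk B l (X k - X (k - dd l)) = (\<Sum>h\<in>{1..\<tau>}. if h \<le> dd l then blk B l (u h) else 0)" .
  qed simp
  also have "\<dots> = (\<Sum>h\<in>{1..\<tau>}. \<Sum>l\<in>{1..m}. if h \<le> dd l then blk B l (u h) else 0)"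
    by (rule sum.swap)
  also have "\<dots> = (\<Sum>h\<in>{1..\<tau>}. \<Sum>l\<in>{l\<in>{1..m}. h \<le> dd l}. blk B l (u h))"
  proof (rule sum.cong[OF refl])
    fix h
    show "(\<Sum>l\<in>{1..m}. if h \<le> dd l then blk B l (u h) else 0) = (\<Sum>l\<in>{l\<in>{1..m}. h \<le> dd l}. blk B l (u h))"
      by (rule sum.inter_filter[symmetric]) simp
  qed
  finally have eq: "X k - (\<Sum>l\<in>{1..m}. blk B l (X (k - dd l))) = (\<Sum>h\<in>{1..\<tau>}. \<Sum>l\<in>{l\<in>{1..m}. h \<le> dd l}. blk B l (u h))" .
  have "norm (\<Sum>h\<in>{1..\<tau>}. \<Sum>l\<in>{l\<in>{1..m}. h \<le> dd l}. blk B l (u h)) \<le> (\<Sum>h\<in>{1..\<tau>}. norm (\<Sum>l\<in>{l\<in>{1..m}. h \<le> dd l}. blk B l (u h)))"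
    by (rule norm_sum)
  also have "\<dots> \<le> (\<Sum>h\<in>{1..\<tau>}. norm (u h))"
  proof (rule sum_mono)
    fix h
    show "norm (\<Sum>l\<in>{l\<in>{1..m}. h \<le> dd l}. blk B l (u h)) \<le> norm (u h)"
      by (rule norm_le_coords, rule blk_coord_sum) auto
  qed
  also have "\<dots> = (\<Sum>h\<in>{1..\<tau>}. norm (X (k - h) - X (k - (h - 1))))"
    unfolding u_def by (simp add: norm_minus_commute)
  finally show ?thesis unfolding eq .
qed

end



lemma reindex_phi:
  fixes Y X :: "nat \<Rightarrow> 'a::real_normed_vector"
  assumes tau: "1 \<le> \<tau>" and Y: "\<And>h. 1 \<le> h \<Longrightarrow> Y h = X (k + 1 - h)"
  shows "(\<Sum>h\<in>{1..\<tau>}. real (\<tau> - h + 1) * (norm (Y h - Y (h - 1)))\<^sup>2)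
       = real \<tau> * (norm (Y 1 - Y 0))\<^sup>2 + (\<Sum>h\<in>{1..\<tau>}. real (\<tau> - h) * (norm (X (k - h) - X (k - (h - 1))))\<^sup>2)"
proof -
  obtain t where t: "\<tau> = Suc t" using tau by (cases \<tau>) auto
  define F where "F = (\<lambda>h. real (\<tau> - h + 1) * (norm (Y h - Y (h - 1)))\<^sup>2)"
  define G where "G = (\<lambda>h. real (\<tau> - h) * (norm (X (k - h) - X (k - (h - 1))))\<^sup>2)"
  have "(\<Sum>h\<in>{1..\<tau>}. F h) = F 1 + (\<Sum>h\<in>{Suc 1..Suc t}. F h)"
    unfolding t by (rule sum.atLeast_Suc_atMost) simp
  also have "(\<Sum>h\<in>{Suc 1..Suc t}. F h) = (\<Sum>h\<in>{1..t}. F (Suc h))"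
    by (rule sum.shift_bounds_cl_Suc_ivl)
  also have "\<dots> = (\<Sum>h\<in>{1..t}. G h)"
  proof (rule sum.cong[OF refl])
    fix h assume h: "h \<in> {1..t}"
    have y1: "Y (Suc h) = X (k - h)" using Y[of "Suc h"] by simp
    have y2: "Y (Suc h - 1) = X (k - (h - 1))" using Y[of h] h by (simp add: Suc_diff_le)
    have "real (\<tau> - Suc h + 1) = real (\<tau> - h)" using h t by simp
    then show "F (Suc h) = G h" unfolding F_def G_def using y1 y2 by simp
  qed
  also have "(\<Sum>h\<in>{1..t}. G h) = (\<Sum>h\<in>{1..\<tau>}. G h)"
    unfolding t G_def by (simp add: sum.cl_ivl_Suc)
  also have "F 1 = real \<tau> * (norm (Y 1 - Y 0))\<^sup>2" unfolding F_def using tau by (simp add: of_nat_diff)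
  finally show ?thesis unfolding F_def G_def .
qed

context blocks begin

lemma final_real:
  fixes \<Delta> :: "nat \<Rightarrow> 'a" and e :: 'a and Dn \<gamma> Lc :: "nat \<Rightarrow> real" and Mc :: real and \<tau> :: nat
  assumes m1: "1 \<le> m" and Mc: "0 \<le> Mc" and sp: "\<forall>i\<in>{1..m}. \<Delta> i \<in> span (B i)"
    and Dnn: "\<forall>h. 0 \<le> Dn h"
    and eb: "norm e \<le> Mc * (\<Sum>h\<in>{1..\<tau>}. Dn h)"
  shows "1 / real m * (\<Sum>i\<in>{1..m}. - (norm (\<Delta> i))\<^sup>2 / (2 * \<gamma> i) + Lc i / 2 * (norm (\<Delta> i))\<^sup>2 + e \<bullet> \<Delta> i
          + Mc / (2 * sqrt (real m)) * (real \<tau> * (norm (\<Delta> i))\<^sup>2 + (\<Sum>h\<in>{1..\<tau>}. real (\<tau> - h) * (Dn h)\<^sup>2)))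
        + 1 / (2 * real m) * (\<Sum>i\<in>{1..m}. (1 / \<gamma> i - Lc i - 2 * Mc * real \<tau> / sqrt (real m)) * (norm (\<Delta> i))\<^sup>2)
      \<le> Mc / (2 * sqrt (real m)) * (\<Sum>h\<in>{1..\<tau>}. real (\<tau> - h + 1) * (Dn h)\<^sup>2)"
proof -
  define sm where "sm = sqrt (real m)"
  have sm: "0 < sm" unfolding sm_def using m1 by simp
  have smm: "sm * sm = real m" unfolding sm_def using m1 by simp
  define K where "K = Mc / (2 * sm) * (\<Sum>h\<in>{1..\<tau>}. real (\<tau> - h) * (Dn h)\<^sup>2)"
  define S2 where "S2 = (\<Sum>h\<in>{1..\<tau>}. (Dn h)\<^sup>2)"
  define V where "V = (\<Sum>i\<in>{1..m}. \<Delta> i)"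
  define N where "N = norm V"
  define c where "c = Mc * real \<tau> / (2 * sm)"
  have blkV: "blk B l V = \<Delta> l" if l: "l \<in> {1..m}" for l
  proof -
    have "blk B l V = (\<Sum>i\<in>{1..m}. blk B l (\<Delta> i))"
      unfolding V_def by (rule linear_sum[OF linear_blk])
    also have "\<dots> = (\<Sum>i\<in>{1..m}. if i = l then \<Delta> l else 0)"
    proof (rule sum.cong[OF refl])
      fix i assume i: "i \<in> {1..m}"
      show "blk B l (\<Delta> i) = (if i = l then \<Delta> l else 0)"
      proof (cases "i = l")
        case True
        then show ?thesis using blk_span[where B=B and j=l, OF bp_sub[OF l]] sp l by simp
      next
        case False
        then show ?thesis using blk_span_other[OF i l False] sp i by simp
      qed
    qed
    also have "\<dots> = \<Delta> l" using l by simp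
    finally show ?thesis .
  qed
  have N2: "N\<^sup>2 = (\<Sum>i\<in>{1..m}. (norm (\<Delta> i))\<^sup>2)"
    unfolding N_def norm_sq_blocks[of V] by (rule sum.cong) (simp_all add: blkV)
  have EV: "e \<bullet> V = (\<Sum>i\<in>{1..m}. e \<bullet> \<Delta> i)"
    unfolding V_def by (rule inner_sum_right)
  have CS: "e \<bullet> V \<le> Mc * (\<Sum>h\<in>{1..\<tau>}. Dn h) * N"
  proof -
    have "e \<bullet> V \<le> norm e * N" unfolding N_def by (rule norm_cauchy_schwarz)
    also have "\<dots> \<le> Mc * (\<Sum>h\<in>{1..\<tau>}. Dn h) * N"
      by (rule mult_right_mono[OF eb]) (simp add: N_def)
    finally show ?thesis .
  qed
  have AM: "Mc * Dn h * N \<le> Mc * sm / 2 * (Dn h)\<^sup>2 + Mc / (2 * sm) * N\<^sup>2" for h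
  proof -
    have "0 \<le> (sm * Dn h - N)\<^sup>2" by simp
    then have "0 \<le> sm * sm * (Dn h)\<^sup>2 - 2 * sm * Dn h * N + N\<^sup>2"
      by (simp add: power2_eq_square algebra_simps)
    then have "0 \<le> (sm * sm * (Dn h)\<^sup>2 - 2 * sm * Dn h * N + N\<^sup>2) / (2 * sm)"
      using sm by simp
    also have "(sm * sm * (Dn h)\<^sup>2 - 2 * sm * Dn h * N + N\<^sup>2) / (2 * sm) = sm / 2 * (Dn h)\<^sup>2 - Dn h * N + N\<^sup>2 / (2 * sm)"
      using sm by (simp add: field_simps power2_eq_square)
    finally have "Dn h * N \<le> sm / 2 * (Dn h)\<^sup>2 + 1 / (2 * sm) * N\<^sup>2" by simp
    from mult_left_mono[OF this Mc] show ?thesis by (simp add: algebra_simps)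
  qed
  have key: "e \<bullet> V \<le> Mc * sm / 2 * S2 + c * N\<^sup>2"
  proof -
    have "Mc * (\<Sum>h\<in>{1..\<tau>}. Dn h) * N = (\<Sum>h\<in>{1..\<tau>}. Mc * Dn h * N)"
      by (simp add: sum_distrib_left sum_distrib_right)
    also have "\<dots> \<le> (\<Sum>h\<in>{1..\<tau>}. Mc * sm / 2 * (Dn h)\<^sup>2 + Mc / (2 * sm) * N\<^sup>2)"
      by (rule sum_mono) (rule AM)
    also have "\<dots> = Mc * sm / 2 * S2 + c * N\<^sup>2"
      unfolding S2_def c_def by (simp add: sum.distrib sum_distrib_left)
    finally show ?thesis using CS by linarith
  qed
  define T where "T = (\<lambda>i. - (norm (\<Delta> i))\<^sup>2 / (2 * \<gamma> i) + Lc i / 2 * (norm (\<Delta> i))\<^sup>2 + e \<bullet> \<Delta> i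
          + Mc / (2 * sm) * (real \<tau> * (norm (\<Delta> i))\<^sup>2 + (\<Sum>h\<in>{1..\<tau>}. real (\<tau> - h) * (Dn h)\<^sup>2)))"
  define C where "C = (\<lambda>i. (1 / \<gamma> i - Lc i - 2 * Mc * real \<tau> / sm) * (norm (\<Delta> i))\<^sup>2)"
  have TC: "T i + C i / 2 = e \<bullet> \<Delta> i - c * (norm (\<Delta> i))\<^sup>2 + K" for i
    unfolding T_def C_def K_def c_def using sm by (simp add: field_simps)
  have "1 / real m * (\<Sum>i\<in>{1..m}. T i) + 1 / (2 * real m) * (\<Sum>i\<in>{1..m}. C i)
      = 1 / real m * (\<Sum>i\<in>{1..m}. T i + C i / 2)"
  proof -
    have s: "(\<Sum>i\<in>{1..m}. T i + C i / 2) = (\<Sum>i\<in>{1..m}. T i) + (\<Sum>i\<in>{1..m}. C i) / 2"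
      by (simp add: sum.distrib sum_divide_distrib)
    have g: "1 / real m * a + 1 / (2 * real m) * b = 1 / real m * (a + b / 2)" for a b :: real
      using m1 by (simp add: field_simps)
    show ?thesis unfolding s by (rule g)
  qed
  also have "\<dots> = 1 / real m * (\<Sum>i\<in>{1..m}. e \<bullet> \<Delta> i - c * (norm (\<Delta> i))\<^sup>2 + K)"
    by (simp add: TC)
  also have "\<dots> = 1 / real m * (e \<bullet> V - c * N\<^sup>2) + K"
    unfolding EV N2 using m1 by (simp add: sum.distrib sum_subtractf sum_distrib_left field_simps)
  also have "\<dots> \<le> 1 / real m * (Mc * sm / 2 * S2) + K"
  proof -
    have "e \<bullet> V - c * N\<^sup>2 \<le> Mc * sm / 2 * S2" using key by simp
    moreover have "0 \<le> 1 / real m" by simp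
    ultimately have "1 / real m * (e \<bullet> V - c * N\<^sup>2) \<le> 1 / real m * (Mc * sm / 2 * S2)"
      by (rule mult_left_mono)
    then show ?thesis by linarith
  qed
  also have "1 / real m * (Mc * sm / 2 * S2) = Mc / (2 * sm) * S2"
    using sm smm[symmetric] by (simp add: field_simps)
  also have "Mc / (2 * sm) * S2 + K = Mc / (2 * sm) * (\<Sum>h\<in>{1..\<tau>}. real (\<tau> - h + 1) * (Dn h)\<^sup>2)"
  proof -
    have "(\<Sum>h\<in>{1..\<tau>}. real (\<tau> - h + 1) * (Dn h)\<^sup>2) = (\<Sum>h\<in>{1..\<tau>}. (Dn h)\<^sup>2 + real (\<tau> - h) * (Dn h)\<^sup>2)"
      by (rule sum.cong) (simp_all add: algebra_simps)
    also have "\<dots> = S2 + (\<Sum>h\<in>{1..\<tau>}. real (\<tau> - h) * (Dn h)\<^sup>2)"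
      unfolding S2_def by (rule sum.distrib)
    finally show ?thesis unfolding K_def by (simp add: algebra_simps)
  qed
  finally show ?thesis unfolding T_def C_def sm_def .
qed

end



lemma (in sigma_finite_subalgebra) nn_cond_exp_sum_fin:
  assumes "finite S" and "\<And>i. i \<in> S \<Longrightarrow> h i \<in> borel_measurable M"
  shows "AE x in M. nn_cond_exp M F (\<lambda>x. \<Sum>i\<in>S. h i x) x = (\<Sum>i\<in>S. nn_cond_exp M F (h i) x)"
  using assms
proof (induction S rule: finite_induct)
  case empty
  have "AE x in M. (\<lambda>x. 0::ennreal) x = nn_cond_exp M F (\<lambda>x. 0) x"
    by (rule nn_cond_exp_F_meas) simp
  then show ?case by (auto elim: AE_mp)
next
  case (insert a S)
  have ma: "h a \<in> borel_measurable M" using insert by simp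
  have mS: "(\<lambda>x. \<Sum>i\<in>S. h i x) \<in> borel_measurable M" using insert by (auto intro!: borel_measurable_sum)
  have A1: "AE x in M. nn_cond_exp M F (h a) x + nn_cond_exp M F (\<lambda>x. \<Sum>i\<in>S. h i x) x
      = nn_cond_exp M F (\<lambda>x. h a x + (\<Sum>i\<in>S. h i x)) x"
    by (rule nn_cond_exp_sum[OF ma mS])
  have A2: "AE x in M. nn_cond_exp M F (\<lambda>x. \<Sum>i\<in>S. h i x) x = (\<Sum>i\<in>S. nn_cond_exp M F (h i) x)"
    using insert by simp
  have e: "(\<lambda>x. \<Sum>i\<in>insert a S. h i x) = (\<lambda>x. h a x + (\<Sum>i\<in>S. h i x))"
    using insert by simp
  show ?case unfolding e using A1 A2 insert(1,2) by (auto elim!: AE_mp)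
qed

lemma nat_filt_space: "space (nat_filtration M X k) = space M"
  unfolding nat_filtration_def by (rule space_measure_of) auto

lemma nat_filt_sets: "sets (nat_filtration M X k) = sigma_sets (space M) {X i -` A \<inter> space M | i A. i \<in> {1..k} \<and> A \<in> sets borel}"
  unfolding nat_filtration_def by (rule sets_measure_of) auto

lemma nat_filt_subalg:
  assumes "\<And>i. i \<in> {1..k} \<Longrightarrow> X i \<in> borel_measurable M"
  shows "subalgebra M (nat_filtration M X k)"
  unfolding subalgebra_def
proof
  show "space (nat_filtration M X k) = space M" by (rule nat_filt_space)
  have "{X i -` A \<inter> space M | i A. i \<in> {1..k} \<and> A \<in> sets borel} \<subseteq> sets M"
    using assms measurable_sets by blast
  then show "sets (nat_filtration M X k) \<subseteq> sets M"
    unfolding nat_filt_sets by (rule sets.sigma_sets_subset)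
qed

lemma nat_filt_meas:
  assumes "i \<in> {1..k}"
  shows "X i \<in> borel_measurable (nat_filtration M X k)"
proof (rule measurableI)
  fix A :: "'b set" assume "A \<in> sets borel"
  then have "X i -` A \<inter> space M \<in> {X i -` A \<inter> space M | i A. i \<in> {1..k} \<and> A \<in> sets borel}"
    using assms by blast
  then show "X i -` A \<inter> space (nat_filtration M X k) \<in> sets (nat_filtration M X k)"
    unfolding nat_filt_sets nat_filt_space by (rule sigma_sets.Basic)
qed simp

lemma ereal_avg:
  fixes \<Phi> :: "nat \<Rightarrow> ereal" and \<Phi>o :: ereal and a :: "nat \<Rightarrow> real" and S :: "nat set"
  assumes fin: "finite S" and ne: "S \<noteq> {}"
    and lb: "\<And>i. i \<in> S \<Longrightarrow> ereal cb \<le> \<Phi> i"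
    and ub: "\<And>i. i \<in> S \<Longrightarrow> \<Phi> i \<le> \<Phi>o + ereal (a i)"
    and avg: "1 / real (card S) * (\<Sum>i\<in>S. a i) + C \<le> 0"
  shows "ereal cb + enn2ereal (\<Sum>i\<in>S. e2ennreal (\<Phi> i - ereal cb) * ennreal (1 / real (card S))) + ereal C \<le> \<Phi>o"
proof (cases \<Phi>o)
  case PInf
  then show ?thesis by simp
next
  case MInf
  obtain i where i: "i \<in> S" using ne by blast
  have "ereal cb \<le> \<Phi>o + ereal (a i)" using lb[OF i] ub[OF i] by (rule order_trans)
  then show ?thesis using MInf by simp
next
  case (real q)
  define p where "p i = real_of_ereal (\<Phi> i)" for i
  have P: "\<Phi> i = ereal (p i)" "cb \<le> p i" "p i \<le> q + a i" if i: "i \<in> S" for i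
  proof -
    have "ereal cb \<le> \<Phi> i" "\<Phi> i \<le> ereal (q + a i)" using lb[OF i] ub[OF i] real by simp_all
    then show "\<Phi> i = ereal (p i)" "cb \<le> p i" "p i \<le> q + a i" unfolding p_def by (cases "\<Phi> i"; simp)+
  qed
  define n where "n = real (card S)"
  have n: "0 < n" unfolding n_def using fin ne by (simp add: card_gt_0_iff)
  have "(\<Sum>i\<in>S. e2ennreal (\<Phi> i - ereal cb) * ennreal (1 / n)) = (\<Sum>i\<in>S. ennreal ((p i - cb) * (1 / n)))"
  proof (rule sum.cong[OF refl])
    fix i assume i: "i \<in> S"
    have "\<Phi> i - ereal cb = ereal (p i - cb)" using P(1)[OF i] by simp
    then show "e2ennreal (\<Phi> i - ereal cb) * ennreal (1 / n) = ennreal ((p i - cb) * (1 / n))"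
      using P(2)[OF i] n by (simp add: ennreal_mult[symmetric] del: times_divide_eq_right)
  qed
  also have "\<dots> = ennreal (\<Sum>i\<in>S. (p i - cb) * (1 / n))"
    by (rule sum_ennreal) (use P(2) n in simp)
  finally have E: "enn2ereal (\<Sum>i\<in>S. e2ennreal (\<Phi> i - ereal cb) * ennreal (1 / n)) = ereal (\<Sum>i\<in>S. (p i - cb) * (1 / n))"
    using P(2) n by (simp add: sum_nonneg)
  have s1: "(\<Sum>i\<in>S. (p i - cb) * (1 / n)) = (\<Sum>i\<in>S. p i) / n - cb"
    using n unfolding n_def by (simp add: sum_subtractf sum_divide_distrib[symmetric] field_simps)
  have s2: "(\<Sum>i\<in>S. p i) \<le> (\<Sum>i\<in>S. q + a i)" by (rule sum_mono) (rule P(3))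
  have s3: "(\<Sum>i\<in>S. q + a i) = n * q + (\<Sum>i\<in>S. a i)" unfolding n_def by (simp add: sum.distrib)
  have "(\<Sum>i\<in>S. p i) / n \<le> (n * q + (\<Sum>i\<in>S. a i)) / n"
    using s2 s3 n by (simp add: divide_right_mono)
  also have "\<dots> = q + 1 / n * (\<Sum>i\<in>S. a i)" using n by (simp add: field_simps)
  finally have "cb + ((\<Sum>i\<in>S. p i) / n - cb) + C \<le> q"
    using avg unfolding n_def by simp
  then show ?thesis unfolding n_def[symmetric] E s1 real by simp
qed




lemma (in prob_space) cond_exp_indicator:
  assumes sf: "sigma_finite_subalgebra M F"
    and J: "J \<in> M \<rightarrow>\<^sub>M count_space UNIV"
    and ind: "indep_set (sets (vimage_algebra (space M) J (count_space UNIV))) (sets F)"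
    and pr: "prob {\<eta>\<in>space M. J \<eta> = i} = p"
  shows "AE \<eta> in M. nn_cond_exp M F (\<lambda>\<eta>. indicator {\<eta>\<in>space M. J \<eta> = i} \<eta>) \<eta> = ennreal p"
proof -
  interpret S: sigma_finite_subalgebra M F by (rule sf)
  define E where "E = {\<eta>\<in>space M. J \<eta> = i}"
  have E_eq: "E = J -` {i} \<inter> space M" unfolding E_def by auto
  have Ev: "E \<in> sets (vimage_algebra (space M) J (count_space UNIV))"
    unfolding E_eq using J by (subst sets_vimage_algebra2) (auto simp: measurable_def)
  have EM: "E \<in> sets M" unfolding E_eq using J by (simp add: measurable_sets)
  have ind2: "\<And>a b. a \<in> sets (vimage_algebra (space M) J (count_space UNIV)) \<Longrightarrow> b \<in> sets F \<Longrightarrow> prob (a \<inter> b) = prob a * prob b"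
    using ind unfolding indep_sets2_eq by blast
  have "AE \<eta> in M. (\<lambda>_. ennreal p) \<eta> = nn_cond_exp M F (\<lambda>\<eta>. indicator E \<eta>) \<eta>"
  proof (rule S.nn_cond_exp_charact)
    fix A assume A: "A \<in> sets F"
    then have AM: "A \<in> sets M" using S.subalg by (auto simp: subalgebra_def)
    have "(\<integral>\<^sup>+ x \<in> A. indicator E x \<partial>M) = (\<integral>\<^sup>+ x. indicator (E \<inter> A) x \<partial>M)"
      by (rule nn_integral_cong) (simp split: split_indicator)
    also have "\<dots> = emeasure M (E \<inter> A)" using EM AM by simp
    also have "\<dots> = ennreal (prob (E \<inter> A))" by (simp add: emeasure_eq_measure)
    also have "prob (E \<inter> A) = p * prob A" using ind2[OF Ev A] pr unfolding E_def by simp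
    also have "ennreal (p * prob A) = ennreal p * emeasure M A"
      using pr by (simp add: emeasure_eq_measure ennreal_mult'' measure_nonneg)
    also have "\<dots> = (\<integral>\<^sup>+ x \<in> A. ennreal p \<partial>M)"
      using AM by (simp add: nn_integral_cmult_indicator)
    finally show "(\<integral>\<^sup>+ x \<in> A. indicator E x \<partial>M) = (\<integral>\<^sup>+ x \<in> A. ennreal p \<partial>M)" .
  qed (use EM in simp_all)
  then show ?thesis unfolding E_def by (auto elim: AE_mp)
qed

context blocks begin

lemma r_blk_meas:
  fixes r :: "'a \<Rightarrow> ereal"
  assumes l: "l \<in> {1..m}" and lsc: "lsc_on (span (B l)) r" and pr: "proper_on (span (B l)) r"
  shows "(\<lambda>x. r (blk B l x)) \<in> borel_measurable borel"
proof (rule borel_measurableI_le)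
  fix y :: ereal
  show "{x \<in> space borel. r (blk B l x) \<le> y} \<in> sets borel"
  proof (cases y)
    case (real t)
    have "{x \<in> space borel. r (blk B l x) \<le> y} = blk B l -` {u \<in> span (B l). r u \<le> ereal t}"
      using real by (auto simp: blk_in_span)
    moreover have "closed (blk B l -` {u \<in> span (B l). r u \<le> ereal t})"
    proof (rule continuous_closed_vimage)
      show "closed {u \<in> span (B l). r u \<le> ereal t}" using lsc unfolding lsc_on_def by blast
      show "\<And>x. continuous (at x) (blk B l)"
        using bounded_linear_blk linear_continuous_at by blast
    qed
    ultimately show ?thesis by simp
  next
    case PInf
    then show ?thesis by simp
  next
    case MInf
    have "{x \<in> space borel. r (blk B l x) \<le> y} = {}"
      using MInf pr blk_in_span unfolding proper_on_def by auto
    then show ?thesis by simp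
  qed
qed

lemma Psi_meas:
  fixes f :: "'a \<Rightarrow> real" and r :: "nat \<Rightarrow> 'a \<Rightarrow> ereal" and Y :: "'w \<Rightarrow> 'a"
  assumes f: "f \<in> borel_measurable borel"
    and rm: "\<And>l. l \<in> {1..m} \<Longrightarrow> (\<lambda>x. r l (blk B l x)) \<in> borel_measurable borel"
    and Y: "Y \<in> borel_measurable N"
  shows "(\<lambda>\<eta>. Psi B m f r (Y \<eta>)) \<in> borel_measurable N"
  unfolding Psi_def rsum_def
proof (intro borel_measurable_ereal_add borel_measurable_ereal borel_measurable_ereal_sum)
  show "(\<lambda>x. f (Y x)) \<in> borel_measurable N" using measurable_compose[OF Y f] .
  fix l assume "l \<in> {1..m}"
  from measurable_compose[OF Y rm[OF this]] show "(\<lambda>x. r l (blk B l (Y x))) \<in> borel_measurable N" .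
qed

lemma Phi_meas:
  fixes f :: "'a \<Rightarrow> real" and r :: "nat \<Rightarrow> 'a \<Rightarrow> ereal" and Yh :: "nat \<Rightarrow> 'w \<Rightarrow> 'a"
  assumes f: "f \<in> borel_measurable borel"
    and rm: "\<And>l. l \<in> {1..m} \<Longrightarrow> (\<lambda>x. r l (blk B l x)) \<in> borel_measurable borel"
    and Y: "\<And>h. Yh h \<in> borel_measurable N"
  shows "(\<lambda>\<eta>. Phi_s B m f r Mc \<tau> (\<lambda>h. Yh h \<eta>)) \<in> borel_measurable N"
  unfolding Phi_s_def
proof (intro borel_measurable_ereal_add borel_measurable_ereal Psi_meas[OF f rm Y])
  note Y[measurable]
  show "(\<lambda>x. Mc / (2 * sqrt (real m)) * (\<Sum>h = 1..\<tau>. real (\<tau> - h + 1) * (norm (Yh h x - Yh (h - 1) x))\<^sup>2)) \<in> borel_measurable N"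
    by measurable
qed

end



lemma ereal_shift:
  fixes a b :: ereal
  assumes "a \<le> b + ereal s"
  shows "a + ereal l \<le> (b + ereal q) + ereal (s + l - q)"
  using assms by (cases a; cases b) simp_all

lemma ereal_le_add_nonneg:
  fixes a :: ereal
  assumes "0 \<le> t"
  shows "a \<le> a + ereal t"
  using assms by (cases a) simp_all

theorem mainTheorem3:
  fixes M :: "'w measure"
    and m \<tau> :: nat
    and B :: "nat \<Rightarrow> 'a::euclidean_space set"
    and f :: "'a \<Rightarrow> real" and g :: "'a \<Rightarrow> 'a"
    and r :: "nat \<Rightarrow> 'a \<Rightarrow> ereal"
    and cb lam c Mc :: real
    and L :: "nat \<Rightarrow> 'a \<Rightarrow> real"
    and \<zeta> :: "nat \<Rightarrow> 'a \<Rightarrow> real \<Rightarrow> 'a"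
    and x0 :: 'a
    and x :: "nat \<Rightarrow> 'w \<Rightarrow> 'a"
    and j :: "nat \<Rightarrow> 'w \<Rightarrow> nat"
    and d :: "nat \<Rightarrow> 'w \<Rightarrow> nat \<Rightarrow> nat"
  assumes prob: "prob_space M"
    and m_pos: "1 \<le> m" and tau_pos: "1 \<le> \<tau>"
    and blocks: "is_block_partition B m"
    and grad: "\<forall>z. (f has_derivative (\<lambda>h. g z \<bullet> h)) (at z)" and grad_cont: "continuous_on UNIV g"
    and r_proper: "\<forall>i\<in>{1..m}. proper_on (span (B i)) (r i)"
    and r_lsc: "\<forall>i\<in>{1..m}. lsc_on (span (B i)) (r i)"
    and bdd_below: "\<forall>z. ereal cb \<le> Psi B m f r z"
    and lam_pos: "0 < lam"
    and prox_bdd: "\<forall>z. \<forall>t. 0 < t \<and> t \<le> lam \<longrightarrow>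
            (\<exists>y. \<forall>u. rsum B m r y + ereal ((norm (z - y))\<^sup>2 / (2 * t))
                     \<le> rsum B m r u + ereal ((norm (z - u))\<^sup>2 / (2 * t)))"
    and L_pos: "\<forall>i\<in>{1..m}. \<forall>z. 0 < L i z"
    and L_lip: "\<forall>i\<in>{1..m}. \<forall>z y y'. y \<in> span (B i) \<longrightarrow> y' \<in> span (B i) \<longrightarrow>
            norm (blk B i (g (repl B i z y)) - blk B i (g (repl B i z y')))
              \<le> L i (z - blk B i z) * norm (y - y')"
    and S1: "\<forall>i\<in>{1..m}. L i \<in> borel_measurable borel"
    and S2_meas: "\<forall>i\<in>{1..m}. (\<lambda>(v, \<gamma>). \<zeta> i v \<gamma>) \<in> borel_measurable (borel \<Otimes>\<^sub>M borel)"
    and S2_prox: "\<forall>i\<in>{1..m}. \<forall>v\<in>span (B i). \<forall>\<gamma>>0. \<zeta> i v \<gamma> \<in> span (B i) \<and>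
            (\<forall>u\<in>span (B i). r i (\<zeta> i v \<gamma>) + ereal ((norm (\<zeta> i v \<gamma> - v))\<^sup>2 / (2 * \<gamma>))
                             \<le> r i u + ereal ((norm (u - v))\<^sup>2 / (2 * \<gamma>)))"
    and c_range: "0 < c" "c < 1" and Mc_pos: "0 < Mc"
    and delays: "\<forall>k \<omega> i. d k \<omega> i \<le> \<tau>"
    and x_init: "\<forall>\<omega>\<in>space M. x 0 \<omega> = x0"
    and x_step: "\<forall>\<omega>\<in>space M. \<forall>k. x (Suc k) \<omega> =
            repl B (j k \<omega>) (x k \<omega>) (wblk B m g \<zeta> L c Mc \<tau> lam x d k \<omega> (j k \<omega>))"
    and j_rv: "\<forall>k. j k \<in> M \<rightarrow>\<^sub>M count_space UNIV"
    and j_unif: "\<forall>k. distr M (count_space UNIV) (j k) = measure_pmf (pmf_of_set {1..m})"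
    and j_iid: "prob_space.indep_vars M (\<lambda>_. count_space UNIV) j UNIV"
    and j_indep_F: "\<forall>k. prob_space.indep_set M
            (sets (vimage_algebra (space M) (j k) (count_space UNIV)))
            (sets (nat_filtration M x k))"
    and delayed_meas: "\<forall>k. delayed B m x d k \<in> borel_measurable (nat_filtration M x k)"
    and S3: "\<exists>Lb>0. AE \<omega> in M. \<forall>k. \<forall>i\<in>{1..m}.
            L i (delayed B m x d k \<omega> - blk B i (delayed B m x d k \<omega>)) \<le> Lb"
    and S4: "AE \<omega> in M. \<forall>k. norm (g (x k \<omega>) - g (delayed B m x d k \<omega>))
            \<le> Mc * norm (x k \<omega> - delayed B m x d k \<omega>)"
  shows "\<forall>k. AE \<omega> in M.
           cond_exp_lb M (nat_filtration M x k) cb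
              (\<lambda>\<eta>. Phi_s B m f r Mc \<tau> (\<lambda>h. x (k + 1 - h) \<eta>)) \<omega>
           + ereal (1 / (2 * real m) * (\<Sum>i\<in>{1..m}.
                (1 / gam B m L c Mc \<tau> lam x d k \<omega> i - L i (x k \<omega> - blk B i (x k \<omega>))
                  - 2 * Mc * real \<tau> / sqrt (real m))
                * (norm (wblk B m g \<zeta> L c Mc \<tau> lam x d k \<omega> i - blk B i (x k \<omega>)))\<^sup>2))
         \<le> Phi_s B m f r Mc \<tau> (\<lambda>h. x (k - h) \<omega>)"
proof
  fix k
  interpret P: prob_space M by (rule prob)
  interpret blocks B m by unfold_locales (rule blocks)
  define F where "F = nat_filtration M x k"
  define z where "z \<eta> = delayed B m x d k \<eta>" for \<eta>
  define \<gamma> where "\<gamma> i \<eta> = gam B m L c Mc \<tau> lam x d k \<eta> i" for i \<eta>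
  define w where "w i \<eta> = wblk B m g \<zeta> L c Mc \<tau> lam x d k \<eta> i" for i \<eta>
  define y where "y i \<eta> = repl B i (x k \<eta>) (w i \<eta>)" for i \<eta>
  define Yh where "Yh i h \<eta> = (if h = 0 then y i \<eta> else x (k + 1 - h) \<eta>)" for i h \<eta>
  define \<Phi> where "\<Phi> i \<eta> = Phi_s B m f r Mc \<tau> (\<lambda>h. Yh i h \<eta>)" for i \<eta>
  define \<Phi>n where "\<Phi>n \<eta> = Phi_s B m f r Mc \<tau> (\<lambda>h. x (k + 1 - h) \<eta>)" for \<eta>
  define Z where "Z i \<eta> = e2ennreal (\<Phi> i \<eta> - ereal cb)" for i \<eta>
  define E where "E i = {\<eta>\<in>space M. j k \<eta> = i}" for i

  have g_meas[measurable]: "g \<in> borel_measurable borel"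
    using grad_cont by (rule borel_measurable_continuous_onI)
  have f_meas[measurable]: "f \<in> borel_measurable borel"
  proof (rule borel_measurable_continuous_onI, rule continuous_at_imp_continuous_on, intro ballI)
    fix z :: 'a
    show "isCont f z" using grad has_derivative_continuous by blast
  qed
  have blk_meas[measurable]: "blk B i \<in> borel_measurable borel" for i
    by (rule borel_measurable_continuous_onI) (rule continuous_blk)
  have rm: "\<And>l. l \<in> {1..m} \<Longrightarrow> (\<lambda>x. r l (blk B l x)) \<in> borel_measurable borel"
    using r_blk_meas r_lsc r_proper by blast
  have subalg_n: "subalgebra M (nat_filtration M x n)" for n
    unfolding subalgebra_def
  proof
    show "space (nat_filtration M x n) = space M" by (rule nat_filt_space)
    show "sets (nat_filtration M x n) \<subseteq> sets M"
      using P.indep_setD_ev2[OF j_indep_F[rule_format, of n]] .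
  qed
  have subalg: "subalgebra M F" unfolding F_def by (rule subalg_n)
  interpret S: sigma_finite_subalgebra M F
    by (rule finite_measure_subalgebra_is_sigma_finite) (unfold_locales, rule subalg)
  have spF: "space F = space M" unfolding F_def by (rule nat_filt_space)
  have xM[measurable]: "x n \<in> borel_measurable M" for n
  proof (cases "n = 0")
    case True
    have "(\<lambda>\<eta>. x0) \<in> borel_measurable M" by simp
    then show ?thesis using True x_init by (subst measurable_cong[where g="\<lambda>\<eta>. x0"]) auto
  next
    case False
    then have "n \<in> {1..n}" by simp
    from nat_filt_meas[OF this, of x M] show ?thesis
      by (rule measurable_from_subalg[OF subalg_n])
  qed
  have xF: "x n \<in> borel_measurable F" if n: "n \<le> k" for n
  proof (cases "n = 0")
    case True
    have "(\<lambda>\<eta>. x0) \<in> borel_measurable F" by simp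
    then show ?thesis using True x_init spF by (subst measurable_cong[where g="\<lambda>\<eta>. x0"]) auto
  next
    case False
    then have "n \<in> {1..k}" using n by simp
    from nat_filt_meas[OF this, of x M] show ?thesis unfolding F_def .
  qed
  have xkF[measurable]: "x k \<in> borel_measurable F" by (rule xF) simp
  have zF[measurable]: "z \<in> borel_measurable F"
    unfolding z_def[abs_def] F_def using delayed_meas by blast
  have \<gamma>F[measurable]: "\<gamma> i \<in> borel_measurable F" if i: "i \<in> {1..m}" for i
  proof -
    have [measurable]: "L i \<in> borel_measurable borel" using S1 i by blast
    show ?thesis unfolding \<gamma>_def[abs_def] gam_def Let_def z_def[symmetric] by measurable
  qed
  have wF[measurable]: "w i \<in> borel_measurable F" if i: "i \<in> {1..m}" for i
  proof -
    have v: "(\<lambda>\<eta>. blk B i (x k \<eta>) - \<gamma> i \<eta> *\<^sub>R blk B i (g (z \<eta>))) \<in> borel_measurable F"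
      using \<gamma>F[OF i] by measurable
    have "(\<lambda>\<eta>. (\<lambda>(v, t). \<zeta> i v t) (blk B i (x k \<eta>) - \<gamma> i \<eta> *\<^sub>R blk B i (g (z \<eta>)), \<gamma> i \<eta>)) \<in> borel_measurable F"
      by (rule measurable_compose[OF measurable_Pair[OF v \<gamma>F[OF i]]]) (use S2_meas i in blast)
    then show ?thesis unfolding w_def[abs_def] wblk_def Let_def \<gamma>_def[symmetric] z_def[symmetric] by simp
  qed
  have yF: "y i \<in> borel_measurable F" if i: "i \<in> {1..m}" for i
    unfolding y_def[abs_def] repl_def using wF[OF i] by measurable
  have \<Phi>F: "\<Phi> i \<in> borel_measurable F" if i: "i \<in> {1..m}" for i
  proof -
    have "Yh i h \<in> borel_measurable F" for h
    proof (cases "h = 0")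
      case True
      then show ?thesis unfolding Yh_def using yF[OF i] by simp
    next
      case False
      then show ?thesis unfolding Yh_def using xF[of "k + 1 - h"] by simp
    qed
    then show ?thesis unfolding \<Phi>_def[abs_def]
      using Phi_meas[OF f_meas rm, where Yh="\<lambda>h. Yh i h" and N=F and Mc=Mc and \<tau>=\<tau>] by blast
  qed
  have ZF: "Z i \<in> borel_measurable F" if i: "i \<in> {1..m}" for i
    unfolding Z_def[abs_def]
    by (rule measurable_compose[OF _ measurable_e2ennreal]) (intro borel_measurable_ereal_diff \<Phi>F[OF i] borel_measurable_const)
  have ZM: "Z i \<in> borel_measurable M" if i: "i \<in> {1..m}" for i
    by (rule measurable_from_subalg[OF subalg ZF[OF i]])
  have \<Phi>nM: "\<Phi>n \<in> borel_measurable M"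
    unfolding \<Phi>n_def[abs_def] by (rule Phi_meas[OF f_meas rm xM])
  have PM: "(\<lambda>\<eta>. e2ennreal (\<Phi>n \<eta> - ereal cb)) \<in> borel_measurable M"
    by (rule measurable_compose[OF _ measurable_e2ennreal]) (intro borel_measurable_ereal_diff \<Phi>nM borel_measurable_const)
  have jM: "j k \<in> M \<rightarrow>\<^sub>M count_space UNIV" using j_rv by blast
  have EM: "E i \<in> sets M" for i
  proof -
    have "E i = j k -` {i} \<inter> space M" unfolding E_def by auto
    then show ?thesis using jM by (simp add: measurable_sets)
  qed
  have indM: "(\<lambda>\<eta>. indicator (E i) \<eta> :: ennreal) \<in> borel_measurable M" for i
    using EM by (rule borel_measurable_indicator)
  have Jm: "AE \<eta> in M. j k \<eta> \<in> {1..m}"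
  proof -
    have "AE i in distr M (count_space UNIV) (j k). i \<in> {1..m}"
      unfolding j_unif[rule_format] using m_pos by (simp add: AE_measure_pmf_iff set_pmf_of_set)
    from AE_distrD[OF jM this] show ?thesis .
  qed
  have prE: "P.prob {\<eta>\<in>space M. j k \<eta> = i} = 1 / real m" if i: "i \<in> {1..m}" for i
  proof -
    have "{\<eta>\<in>space M. j k \<eta> = i} = j k -` {i} \<inter> space M" by auto
    then have "P.prob {\<eta>\<in>space M. j k \<eta> = i} = measure (distr M (count_space UNIV) (j k)) {i}"
      using measure_distr[OF jM, of "{i}"] by simp
    also have "\<dots> = measure_pmf.prob (pmf_of_set {1..m}) {i}" unfolding j_unif[rule_format] ..
    also have "\<dots> = 1 / real m" using i m_pos by (subst measure_pmf_of_set) auto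
    finally show ?thesis .
  qed
  have A4: "AE \<eta> in M. nn_cond_exp M F (\<lambda>\<eta>. indicator (E i) \<eta>) \<eta> = ennreal (1 / real m)" if i: "i \<in> {1..m}" for i
    unfolding E_def
    by (rule P.cond_exp_indicator[OF S.sigma_finite_subalgebra_axioms jM j_indep_F[rule_format, of k, folded F_def] prE[OF i]])
  have A3: "AE \<eta> in M. Z i \<eta> * nn_cond_exp M F (\<lambda>\<eta>. indicator (E i) \<eta>) \<eta> = nn_cond_exp M F (\<lambda>\<eta>. Z i \<eta> * indicator (E i) \<eta>) \<eta>"
    if i: "i \<in> {1..m}" for i
    by (rule S.nn_cond_exp_prod[OF ZF[OF i] indM])
  have prodM: "(\<lambda>\<eta>. Z i \<eta> * indicator (E i) \<eta>) \<in> borel_measurable M" if i: "i \<in> {1..m}" for i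
  proof -
    note ZM[OF i, measurable] indM[of i, measurable]
    show ?thesis by measurable
  qed
  have A2: "AE \<eta> in M. nn_cond_exp M F (\<lambda>\<eta>. \<Sum>i\<in>{1..m}. Z i \<eta> * indicator (E i) \<eta>) \<eta>
       = (\<Sum>i\<in>{1..m}. nn_cond_exp M F (\<lambda>\<eta>. Z i \<eta> * indicator (E i) \<eta>) \<eta>)"
    by (rule S.nn_cond_exp_sum_fin) (simp_all add: prodM)
  have sumM: "(\<lambda>\<eta>. \<Sum>i\<in>{1..m}. Z i \<eta> * indicator (E i) \<eta>) \<in> borel_measurable M"
    by (rule borel_measurable_sum) (rule prodM)
  have Adec: "AE \<eta> in M. e2ennreal (\<Phi>n \<eta> - ereal cb) = (\<Sum>i\<in>{1..m}. Z i \<eta> * indicator (E i) \<eta>)"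
    using Jm
  proof (rule AE_mp)
    show "AE \<eta> in M. j k \<eta> \<in> {1..m} \<longrightarrow> e2ennreal (\<Phi>n \<eta> - ereal cb) = (\<Sum>i\<in>{1..m}. Z i \<eta> * indicator (E i) \<eta>)"
    proof (rule AE_I2, rule impI)
      fix \<eta> assume \<eta>: "\<eta> \<in> space M" and ji: "j k \<eta> \<in> {1..m}"
      define i0 where "i0 = j k \<eta>"
      have xs: "x (k + 1) \<eta> = y i0 \<eta>"
        using x_step \<eta> unfolding y_def w_def i0_def by simp
      have "(\<lambda>h. x (k + 1 - h) \<eta>) = (\<lambda>h. Yh i0 h \<eta>)"
      proof
        fix h show "x (k + 1 - h) \<eta> = Yh i0 h \<eta>" unfolding Yh_def using xs by (cases "h = 0") simp_all
      qed
      then have "\<Phi>n \<eta> = \<Phi> i0 \<eta>" unfolding \<Phi>n_def \<Phi>_def by simp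
      moreover have "(\<Sum>i\<in>{1..m}. Z i \<eta> * indicator (E i) \<eta>) = (\<Sum>i\<in>{1..m}. if i = i0 then Z i \<eta> else 0)"
        by (rule sum.cong[OF refl]) (simp add: E_def \<eta> i0_def indicator_def)
      moreover have "\<dots> = Z i0 \<eta>" using ji unfolding i0_def by simp
      ultimately show "e2ennreal (\<Phi>n \<eta> - ereal cb) = (\<Sum>i\<in>{1..m}. Z i \<eta> * indicator (E i) \<eta>)"
        unfolding Z_def by simp
    qed
  qed
  have A1: "AE \<eta> in M. nn_cond_exp M F (\<lambda>\<eta>. e2ennreal (\<Phi>n \<eta> - ereal cb)) \<eta>
       = nn_cond_exp M F (\<lambda>\<eta>. \<Sum>i\<in>{1..m}. Z i \<eta> * indicator (E i) \<eta>) \<eta>"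
    by (rule S.nn_cond_exp_cong[OF Adec PM sumM])
  have A34: "AE \<eta> in M. \<forall>i\<in>{1..m}. nn_cond_exp M F (\<lambda>\<eta>. Z i \<eta> * indicator (E i) \<eta>) \<eta> = Z i \<eta> * ennreal (1 / real m)"
  proof (rule AE_finite_allI)
    fix i assume i: "i \<in> {1..m}"
    show "AE \<eta> in M. nn_cond_exp M F (\<lambda>\<eta>. Z i \<eta> * indicator (E i) \<eta>) \<eta> = Z i \<eta> * ennreal (1 / real m)"
      using A3[OF i] A4[OF i] by eventually_elim simp
  qed simp
  have ACE: "AE \<eta> in M. nn_cond_exp M F (\<lambda>\<eta>. e2ennreal (\<Phi>n \<eta> - ereal cb)) \<eta> = (\<Sum>i\<in>{1..m}. Z i \<eta> * ennreal (1 / real m))"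
    using A1 A2 A34 by eventually_elim simp
  have S4k: "AE \<eta> in M. norm (g (x k \<eta>) - g (z \<eta>)) \<le> Mc * norm (x k \<eta> - z \<eta>)"
    using S4 unfolding z_def by eventually_elim blast
  have det: "ereal cb + enn2ereal (\<Sum>i\<in>{1..m}. Z i \<omega> * ennreal (1 / real (card {1..m})))
      + ereal (1 / (2 * real m) * (\<Sum>i\<in>{1..m}.
                (1 / \<gamma> i \<omega> - L i (x k \<omega> - blk B i (x k \<omega>)) - 2 * Mc * real \<tau> / sqrt (real m))
                * (norm (w i \<omega> - blk B i (x k \<omega>)))\<^sup>2))
      \<le> Phi_s B m f r Mc \<tau> (\<lambda>h. x (k - h) \<omega>)"
    if \<omega>: "\<omega> \<in> space M" and s4: "norm (g (x k \<omega>) - g (z \<omega>)) \<le> Mc * norm (x k \<omega> - z \<omega>)" for \<omega>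
  proof -
    define xk where "xk = x k \<omega>"
    define zd where "zd = z \<omega>"
    define \<Delta> where "\<Delta> i = w i \<omega> - blk B i xk" for i
    define e where "e = g xk - g zd"
    define Dn where "Dn h = norm (x (k - h) \<omega> - x (k - (h - 1)) \<omega>)" for h
    define Lc where "Lc i = L i (xk - blk B i xk)" for i
    define \<gamma>\<omega> where "\<gamma>\<omega> i = \<gamma> i \<omega>" for i
    define T where "T i = - (norm (\<Delta> i))\<^sup>2 / (2 * \<gamma>\<omega> i) + Lc i / 2 * (norm (\<Delta> i))\<^sup>2 + e \<bullet> \<Delta> i
          + Mc / (2 * sqrt (real m)) * (real \<tau> * (norm (\<Delta> i))\<^sup>2 + (\<Sum>h\<in>{1..\<tau>}. real (\<tau> - h) * (Dn h)\<^sup>2))" for i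
    define lo where "lo = Mc / (2 * sqrt (real m)) * (\<Sum>h\<in>{1..\<tau>}. real (\<tau> - h + 1) * (Dn h)\<^sup>2)"
    have \<Phi>o: "Phi_s B m f r Mc \<tau> (\<lambda>h. x (k - h) \<omega>) = Psi B m f r xk + ereal lo"
      unfolding Phi_s_def lo_def Dn_def xk_def by simp
    have per_i: "ereal cb \<le> \<Phi> i \<omega> \<and> \<Phi> i \<omega> \<le> Phi_s B m f r Mc \<tau> (\<lambda>h. x (k - h) \<omega>) + ereal (T i - lo)"
      if i: "i \<in> {1..m}" for i
    proof -
      have Lp: "0 < L i (zd - blk B i zd)" using L_pos i by blast
      have den: "0 < L i (zd - blk B i zd) + 2 * Mc * real \<tau> / sqrt (real m)"
        using Lp Mc_pos by (simp add: add_pos_nonneg)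
      have gp: "0 < \<gamma>\<omega> i"
        unfolding \<gamma>\<omega>_def \<gamma>_def gam_def Let_def z_def[symmetric] zd_def[symmetric]
        using den c_range lam_pos by simp
      define v where "v = blk B i xk - \<gamma>\<omega> i *\<^sub>R blk B i (g zd)"
      have vs: "v \<in> span (B i)" unfolding v_def by (intro span_diff span_scale blk_in_span)
      have weq: "w i \<omega> = \<zeta> i v (\<gamma>\<omega> i)"
        unfolding w_def wblk_def Let_def v_def \<gamma>\<omega>_def \<gamma>_def xk_def zd_def z_def ..
      have px: "\<zeta> i v (\<gamma>\<omega> i) \<in> span (B i) \<and>
            (\<forall>u\<in>span (B i). r i (\<zeta> i v (\<gamma>\<omega> i)) + ereal ((norm (\<zeta> i v (\<gamma>\<omega> i) - v))\<^sup>2 / (2 * \<gamma>\<omega> i))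
                             \<le> r i u + ereal ((norm (u - v))\<^sup>2 / (2 * \<gamma>\<omega> i)))"
        using S2_prox i vs gp by blast
      have ws: "w i \<omega> \<in> span (B i)" using px weq by simp
      have prox: "r i (w i \<omega>) + ereal ((norm (w i \<omega> - v))\<^sup>2 / (2 * \<gamma>\<omega> i))
              \<le> r i (blk B i xk) + ereal ((norm (blk B i xk - v))\<^sup>2 / (2 * \<gamma>\<omega> i))"
        using bspec[OF conjunct2[OF px] blk_in_span[of B i xk]] weq by simp
      have sb: "Psi B m f r (repl B i xk (w i \<omega>)) \<le> Psi B m f r xk + ereal (- (norm (w i \<omega> - blk B i xk))\<^sup>2 / (2 * \<gamma>\<omega> i)
          + L i (xk - blk B i xk) / 2 * (norm (w i \<omega> - blk B i xk))\<^sup>2 + (g xk - g zd) \<bullet> (w i \<omega> - blk B i xk))"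
        by (rule step_bound[where f=f and g=g and L=L and r=r and i=i and xk=xk and zd=zd and w="w i \<omega>" and \<gamma>="\<gamma>\<omega> i", OF grad bspec[OF L_lip i] i gp ws prox[unfolded v_def]])
      have yeq: "y i \<omega> = repl B i xk (w i \<omega>)" unfolding y_def xk_def ..
      have ydiff: "norm (x k \<omega> - y i \<omega>) = norm (\<Delta> i)"
        unfolding yeq repl_span[OF i ws] \<Delta>_def xk_def by (simp add: norm_minus_commute)
      have rp: "(\<Sum>h\<in>{1..\<tau>}. real (\<tau> - h + 1) * (norm (Yh i h \<omega> - Yh i (h - 1) \<omega>))\<^sup>2)
          = real \<tau> * (norm (Yh i 1 \<omega> - Yh i 0 \<omega>))\<^sup>2 + (\<Sum>h\<in>{1..\<tau>}. real (\<tau> - h) * (norm (x (k - h) \<omega> - x (k - (h - 1)) \<omega>))\<^sup>2)"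
        by (rule reindex_phi[OF tau_pos]) (simp add: Yh_def)
      have \<Phi>eq: "\<Phi> i \<omega> = Psi B m f r (repl B i xk (w i \<omega>))
          + ereal (Mc / (2 * sqrt (real m)) * (real \<tau> * (norm (\<Delta> i))\<^sup>2 + (\<Sum>h\<in>{1..\<tau>}. real (\<tau> - h) * (Dn h)\<^sup>2)))"
        unfolding \<Phi>_def Phi_s_def rp Dn_def using ydiff yeq by (simp add: Yh_def)
      have nn: "0 \<le> Mc / (2 * sqrt (real m)) * (real \<tau> * (norm (\<Delta> i))\<^sup>2 + (\<Sum>h\<in>{1..\<tau>}. real (\<tau> - h) * (Dn h)\<^sup>2))"
        using Mc_pos by (intro mult_nonneg_nonneg add_nonneg_nonneg sum_nonneg) auto
      have lb: "ereal cb \<le> \<Phi> i \<omega>"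
        unfolding \<Phi>eq using bdd_below ereal_le_add_nonneg[OF nn] by (meson order_trans)
      have ub: "\<Phi> i \<omega> \<le> (Psi B m f r xk + ereal lo) + ereal (T i - lo)"
        unfolding \<Phi>eq T_def
        using ereal_shift[OF sb] unfolding \<Delta>_def Lc_def e_def \<gamma>\<omega>_def by simp
      show ?thesis using lb ub \<Phi>o by simp
    qed
    have sp: "\<forall>i\<in>{1..m}. \<Delta> i \<in> span (B i)"
    proof
      fix i assume i: "i \<in> {1..m}"
      have "w i \<omega> \<in> span (B i)"
      proof -
        define v where "v = blk B i xk - \<gamma>\<omega> i *\<^sub>R blk B i (g zd)"
        have vs: "v \<in> span (B i)" unfolding v_def by (intro span_diff span_scale blk_in_span)
        have Lp: "0 < L i (zd - blk B i zd)" using L_pos i by blast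
        have den: "0 < L i (zd - blk B i zd) + 2 * Mc * real \<tau> / sqrt (real m)"
          using Lp Mc_pos by (simp add: add_pos_nonneg)
        have gp: "0 < \<gamma>\<omega> i"
          unfolding \<gamma>\<omega>_def \<gamma>_def gam_def Let_def z_def[symmetric] zd_def[symmetric]
          using den c_range lam_pos by simp
        have weq: "w i \<omega> = \<zeta> i v (\<gamma>\<omega> i)"
          unfolding w_def wblk_def Let_def v_def \<gamma>\<omega>_def \<gamma>_def xk_def zd_def z_def ..
        then show ?thesis using S2_prox i vs gp by simp
      qed
      then show "\<Delta> i \<in> span (B i)" unfolding \<Delta>_def by (intro span_diff blk_in_span)
    qed
    have Dnn: "\<forall>h. 0 \<le> Dn h" unfolding Dn_def by simp
    have eb: "norm e \<le> Mc * (\<Sum>h\<in>{1..\<tau>}. Dn h)"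
    proof -
      have "norm (xk - zd) \<le> (\<Sum>h\<in>{1..\<tau>}. Dn h)"
        using delay_bound[of "d k \<omega>" \<tau> "\<lambda>n. x n \<omega>" k] delays
        unfolding xk_def zd_def z_def delayed_def Dn_def by simp
      then have "Mc * norm (xk - zd) \<le> Mc * (\<Sum>h\<in>{1..\<tau>}. Dn h)"
        using Mc_pos by (simp add: mult_left_mono)
      then show ?thesis using s4 unfolding e_def xk_def zd_def by simp
    qed
    have fr: "1 / real m * (\<Sum>i\<in>{1..m}. T i)
        + 1 / (2 * real m) * (\<Sum>i\<in>{1..m}. (1 / \<gamma>\<omega> i - Lc i - 2 * Mc * real \<tau> / sqrt (real m)) * (norm (\<Delta> i))\<^sup>2)
      \<le> lo"
      unfolding T_def lo_def
      by (rule final_real[OF m_pos _ sp Dnn eb]) (use Mc_pos in simp)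
    define C where "C = 1 / (2 * real m) * (\<Sum>i\<in>{1..m}. (1 / \<gamma>\<omega> i - Lc i - 2 * Mc * real \<tau> / sqrt (real m)) * (norm (\<Delta> i))\<^sup>2)"
    have avg: "1 / real (card {1..m}) * (\<Sum>i\<in>{1..m}. T i - lo) + C \<le> 0"
    proof -
      have "(\<Sum>i\<in>{1..m}. T i - lo) = (\<Sum>i\<in>{1..m}. T i) - real m * lo"
        by (simp add: sum_subtractf)
      then have "1 / real (card {1..m}) * (\<Sum>i\<in>{1..m}. T i - lo) = 1 / real m * (\<Sum>i\<in>{1..m}. T i) - lo"
        using m_pos by (simp add: field_simps)
      then show ?thesis using fr unfolding C_def by simp
    qed
    have "ereal cb + enn2ereal (\<Sum>i\<in>{1..m}. e2ennreal (\<Phi> i \<omega> - ereal cb) * ennreal (1 / real (card {1..m}))) + ereal C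
        \<le> Phi_s B m f r Mc \<tau> (\<lambda>h. x (k - h) \<omega>)"
      by (rule ereal_avg[where a="\<lambda>i. T i - lo"]) (use per_i avg m_pos in auto)
    then show ?thesis unfolding C_def Z_def \<Delta>_def Lc_def \<gamma>\<omega>_def xk_def .
  qed
  show "AE \<omega> in M.
           cond_exp_lb M (nat_filtration M x k) cb
              (\<lambda>\<eta>. Phi_s B m f r Mc \<tau> (\<lambda>h. x (k + 1 - h) \<eta>)) \<omega>
           + ereal (1 / (2 * real m) * (\<Sum>i\<in>{1..m}.
                (1 / gam B m L c Mc \<tau> lam x d k \<omega> i - L i (x k \<omega> - blk B i (x k \<omega>))
                  - 2 * Mc * real \<tau> / sqrt (real m))
                * (norm (wblk B m g \<zeta> L c Mc \<tau> lam x d k \<omega> i - blk B i (x k \<omega>)))\<^sup>2))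
         \<le> Phi_s B m f r Mc \<tau> (\<lambda>h. x (k - h) \<omega>)"
    using ACE S4k AE_space
  proof eventually_elim
    case (elim \<omega>)
    have "cond_exp_lb M (nat_filtration M x k) cb (\<lambda>\<eta>. Phi_s B m f r Mc \<tau> (\<lambda>h. x (k + 1 - h) \<eta>)) \<omega>
        = ereal cb + enn2ereal (\<Sum>i\<in>{1..m}. Z i \<omega> * ennreal (1 / real (card {1..m})))"
      unfolding cond_exp_lb_def F_def[symmetric] \<Phi>n_def[symmetric] using elim(1) by simp
    then show ?case using det[OF elim(3) elim(2)] unfolding \<gamma>_def w_def by simp
  qed
qed


end
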